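(* Let Assumptions 1 and 2 (stated in the context) hold and let $g',g''\in L^2[0,1]$. Put $C_1=(\tilde x_2-\tilde x_1)^{1/2}/\min\{\tilde x_1-x_1,\ x_2-\tilde x_2\}$, $c_p=\min\{1-w_2,w_1\}\min\{C_F-1,2\}c_Wc_f/4$ and $\bar C=C_1/c_p$. If there exists $h\in L^2[0,1]$ such that $g'-g''+h\in\mathcal M$ and $$\|h\|_{2,t}+\bar C\|T\|_2\|h\|_2<\|g'-g''\|_{2,t},$$ then $g'$ and $g''$ are not observationally equivalent, i.e. it is not the case that $E[g'(X)-g''(X)\mid W]=0$ almost surely (equivalently, $\|T(g'-g'')\|_2>0$).
   Context: Let $(X,W)$ be a random pair with values in $[0,1]^2$; $F_{X|W}(x|w)$, $f_{X|W}(x|w)$, $f_{X,W}$, $f_W$ denote the conditional distribution function of $X$ given $W=w$, the conditional density, the joint density and the marginal density of $W$. Fix constants $0\le x_1<\tilde x_1<\tilde x_2<x_2\le1$ and $0<w_1<w_2<1$. "Increasing" means non-decreasing and "decreasing" means non-increasing. Assumption 1 (Monotone IV): (a) for all $x,w',w''\in(0,1)$ with $w'\le w''$, $F_{X|W}(x|w')\ge F_{X|W}(x|w'')$; (b) there is a constant $C_F>1$ such that $F_{X|W}(x|w_1)\ge C_F F_{X|W}(x|w_2)$ for all $x\in(0,x_2)$, and $C_F(1-F_{X|W}(x|w_1))\le 1-F_{X|W}(x|w_2)$ for all $x\in(x_1,1)$. Assumption 2 (Density): (i) $(X,W)$ has a density $f_{X,W}$ with respect to Lebesgue measure on $[0,1]^2$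 with $\int_0^1\int_0^1 f_{X,W}(x,w)^2\,dx\,dw\le C_T$ for a finite constant $C_T$; (ii) there is $c_f>0$ with $f_{X|W}(x|w)\ge c_f$ for all $x\in[x_1,x_2]$ and $w\in\{w_1,w_2\}$; (iii) there are constants $0<c_W\le C_W<\infty$ with $c_W\le f_W(w)\le C_W$ for all $w\in[0,1]$. The operator $T:L^2[0,1]\to L^2[0,1]$ is $(Th)(w)=E[h(X)\mid W=w]f_W(w)=\int_0^1 h(x)f_{X,W}(x,w)\,dx$, with operator norm $\|T\|_2=\sup_{\|h\|_2=1}\|Th\|_2$. The truncated norm is $\|h\|_{2,t}=\big(\int_{\tilde x_1}^{\tilde x_2}h(x)^2dx\big)^{1/2}$. $\mathcal M$ denotes the set of all monotone (increasing or decreasing) functions in $L^2[0,1]$. *)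

theory Defs
  imports "HOL-Analysis.Analysis"
begin

text \<open>The joint density of (X,W) is represented by a function f with f x w = f_{X,W}(x,w);
  all quantities are computed on the unit square [0,1]^2.\<close>

definition joint_density :: "(real \<Rightarrow> real \<Rightarrow> real) \<Rightarrow> bool" where
  "joint_density f \<longleftrightarrow>
     (\<forall>x\<in>{0..1}. \<forall>w\<in>{0..1}. 0 \<le> f x w) \<and>
     (\<lambda>(x,w). f x w) \<in> borel_measurable (lborel \<Otimes>\<^sub>M lborel) \<and>
     set_integrable (lborel \<Otimes>\<^sub>M lborel) ({0..1} \<times> {0..1}) (\<lambda>(x,w). f x w) \<and>
     (LINT p:({0..1} \<times> {0..1})|(lborel \<Otimes>\<^sub>M lborel). (\<lambda>(x,w). f x w) p) = 1"

definition fW :: "(real \<Rightarrow> real \<Rightarrow> real) \<Rightarrow> real \<Rightarrow> real" where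
  "fW f w = (LINT x:{0..1}|lborel. f x w)"

definition fXgW :: "(real \<Rightarrow> real \<Rightarrow> real) \<Rightarrow> real \<Rightarrow> real \<Rightarrow> real" where
  "fXgW f x w = f x w / fW f w"

definition FXgW :: "(real \<Rightarrow> real \<Rightarrow> real) \<Rightarrow> real \<Rightarrow> real \<Rightarrow> real" where
  "FXgW f x w = (LINT t:{0..x}|lborel. f t w) / fW f w"

definition L2 :: "(real \<Rightarrow> real) \<Rightarrow> bool" where
  "L2 h \<longleftrightarrow> h \<in> borel_measurable lborel \<and> set_integrable lborel {0..1} (\<lambda>x. (h x)\<^sup>2)"

definition norm2 :: "(real \<Rightarrow> real) \<Rightarrow> real" where
  "norm2 h = sqrt (LINT x:{0..1}|lborel. (h x)\<^sup>2)"

definition norm2t :: "real \<Rightarrow> real \<Rightarrow> (real \<Rightarrow> real) \<Rightarrow> real" where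
  "norm2t a b h = sqrt (LINT x:{a..b}|lborel. (h x)\<^sup>2)"

definition Top :: "(real \<Rightarrow> real \<Rightarrow> real) \<Rightarrow> (real \<Rightarrow> real) \<Rightarrow> real \<Rightarrow> real" where
  "Top f h w = (LINT x:{0..1}|lborel. h x * f x w)"

definition opnorm :: "(real \<Rightarrow> real \<Rightarrow> real) \<Rightarrow> real" where
  "opnorm f = Sup {norm2 (Top f h) | h. L2 h \<and> norm2 h = 1}"

definition inM :: "(real \<Rightarrow> real) \<Rightarrow> bool" where
  "inM u \<longleftrightarrow> L2 u \<and> (\<exists>m. (mono_on {0..1} m \<or> antimono_on {0..1} m) \<and>
      (AE x in lborel. x \<in> {0..1} \<longrightarrow> u x = m x))"

end

theory Submission
  imports Defs
begin


lemma sint_nonneg: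
  fixes f :: "'a \<Rightarrow> real"
  assumes "\<And>x. x \<in> S \<Longrightarrow> 0 \<le> f x"
  shows "0 \<le> (LINT x:S|M. f x)"
  unfolding set_lebesgue_integral_def
  by (rule Bochner_Integration.integral_nonneg) (auto simp: assms indicator_def)

lemma CS_set:
  fixes f g :: "real \<Rightarrow> real"
  assumes [measurable]: "f \<in> borel_measurable lborel" "g \<in> borel_measurable lborel" "S \<in> sets lborel"
    and f2: "set_integrable lborel S (\<lambda>x. (f x)\<^sup>2)" and g2: "set_integrable lborel S (\<lambda>x. (g x)\<^sup>2)"
  shows "set_integrable lborel S (\<lambda>x. f x * g x)"
    and "(LINT x:S|lborel. f x * g x)\<^sup>2 \<le> (LINT x:S|lborel. (f x)\<^sup>2) * (LINT x:S|lborel. (g x)\<^sup>2)"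
proof -
  have sfg: "set_integrable lborel S (\<lambda>x. (f x)\<^sup>2 + (g x)\<^sup>2)" using f2 g2 by auto
  show fg: "set_integrable lborel S (\<lambda>x. f x * g x)"
  proof (rule set_integrable_bound[OF sfg])
    show "set_borel_measurable lborel S (\<lambda>x. f x * g x)"
      unfolding set_borel_measurable_def by measurable
    have "\<And>x. \<bar>f x * g x\<bar> \<le> \<bar>(f x)\<^sup>2 + (g x)\<^sup>2\<bar>"
    proof -
      fix x
      have "2 * \<bar>f x\<bar> * \<bar>g x\<bar> \<le> \<bar>f x\<bar>\<^sup>2 + \<bar>g x\<bar>\<^sup>2"
        using sum_squares_bound[of "\<bar>f x\<bar>" "\<bar>g x\<bar>"] by (simp add: power2_eq_square)
      moreover have "0 \<le> \<bar>f x\<bar> * \<bar>g x\<bar>" by simp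
      moreover have "\<bar>f x * g x\<bar> = \<bar>f x\<bar> * \<bar>g x\<bar>" by (rule abs_mult)
      moreover have "\<bar>(f x)\<^sup>2 + (g x)\<^sup>2\<bar> = (f x)\<^sup>2 + (g x)\<^sup>2" by simp
      moreover have "\<bar>f x\<bar>\<^sup>2 = (f x)\<^sup>2" "\<bar>g x\<bar>\<^sup>2 = (g x)\<^sup>2" by simp_all
      ultimately show "\<bar>f x * g x\<bar> \<le> \<bar>(f x)\<^sup>2 + (g x)\<^sup>2\<bar>" by linarith
    qed
    then show "AE x in lborel. x \<in> S \<longrightarrow> norm (f x * g x) \<le> norm ((f x)\<^sup>2 + (g x)\<^sup>2)" by simp
  qed
  define A where "A = (LINT x:S|lborel. (f x)\<^sup>2)"
  define B where "B = (LINT x:S|lborel. f x * g x)"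
  define C where "C = (LINT x:S|lborel. (g x)\<^sup>2)"
  have C0: "C \<ge> 0" unfolding C_def by (rule sint_nonneg) simp
  have quad: "0 \<le> A - 2 * t * B + t\<^sup>2 * C" for t
  proof -
    have "0 \<le> (LINT x:S|lborel. (f x - t * g x)\<^sup>2)" by (rule sint_nonneg) simp
    also have "(LINT x:S|lborel. (f x - t * g x)\<^sup>2) =
        (LINT x:S|lborel. (f x)\<^sup>2 - (2 * t) * (f x * g x) + t\<^sup>2 * (g x)\<^sup>2)"
      by (simp add: power2_eq_square algebra_simps)
    also have "\<dots> = A - 2 * t * B + t\<^sup>2 * C"
      unfolding A_def B_def C_def using f2 g2 fg
      by (subst set_integral_add(2)) (auto simp: set_integral_diff)
    finally show ?thesis .
  qed
  have "B\<^sup>2 \<le> A * C"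
  proof (cases "C = 0")
    case True
    have "B = 0"
    proof (rule ccontr)
      assume "B \<noteq> 0"
      have "0 \<le> A - 2 * ((A + 1) / (2 * B)) * B" using quad[of "(A+1)/(2*B)"] True by simp
      also have "\<dots> = -1" using \<open>B \<noteq> 0\<close> by (simp add: field_simps)
      finally show False by simp
    qed
    then show ?thesis using True by simp
  next
    case False
    then have Cp: "C > 0" using C0 by simp
    have "0 \<le> A - 2 * (B / C) * B + (B / C)\<^sup>2 * C" by (rule quad)
    also have "\<dots> = (A * C - B\<^sup>2) / C" using Cp by (simp add: field_simps power2_eq_square)
    finally show ?thesis using Cp by (simp add: divide_nonneg_pos zero_le_divide_iff)
  qed
  then show "(LINT x:S|lborel. f x * g x)\<^sup>2 \<le> (LINT x:S|lborel. (f x)\<^sup>2) * (LINT x:S|lborel. (g x)\<^sup>2)"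
    unfolding A_def B_def C_def .
qed

lemma mink_set:
  fixes f g :: "real \<Rightarrow> real"
  assumes [measurable]: "f \<in> borel_measurable lborel" "g \<in> borel_measurable lborel" "S \<in> sets lborel"
    and f2: "set_integrable lborel S (\<lambda>x. (f x)\<^sup>2)" and g2: "set_integrable lborel S (\<lambda>x. (g x)\<^sup>2)"
  shows "sqrt (LINT x:S|lborel. (f x + g x)\<^sup>2) \<le> sqrt (LINT x:S|lborel. (f x)\<^sup>2) + sqrt (LINT x:S|lborel. (g x)\<^sup>2)"
proof -
  define A where "A = (LINT x:S|lborel. (f x)\<^sup>2)"
  define B where "B = (LINT x:S|lborel. f x * g x)"
  define C where "C = (LINT x:S|lborel. (g x)\<^sup>2)"
  have fg: "set_integrable lborel S (\<lambda>x. f x * g x)" using CS_set[OF assms] by simp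
  have BAC: "B\<^sup>2 \<le> A * C" unfolding A_def B_def C_def using CS_set[OF assms] by simp
  have A0: "A \<ge> 0" unfolding A_def by (rule sint_nonneg) simp
  have C0: "C \<ge> 0" unfolding C_def by (rule sint_nonneg) simp
  have "(LINT x:S|lborel. (f x + g x)\<^sup>2) = (LINT x:S|lborel. (f x)\<^sup>2 + 2 * (f x * g x) + (g x)\<^sup>2)"
    by (simp add: power2_eq_square algebra_simps)
  also have "\<dots> = A + 2 * B + C"
    unfolding A_def B_def C_def using f2 g2 fg
    by (subst set_integral_add(2)) auto
  finally have eq: "(LINT x:S|lborel. (f x + g x)\<^sup>2) = A + 2 * B + C" .
  have "B \<le> sqrt A * sqrt C"
  proof -
    have "B \<le> sqrt (B\<^sup>2)" by simp
    also have "\<dots> \<le> sqrt (A * C)" using BAC by (rule real_sqrt_le_mono)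
    finally show ?thesis by (simp add: real_sqrt_mult)
  qed
  then have "A + 2 * B + C \<le> (sqrt A + sqrt C)\<^sup>2"
    using A0 C0 by (simp add: power2_eq_square algebra_simps)
  then have "sqrt (A + 2 * B + C) \<le> sqrt ((sqrt A + sqrt C)\<^sup>2)" by (rule real_sqrt_le_mono)
  also have "\<dots> = sqrt A + sqrt C" using A0 C0 by simp
  finally show ?thesis unfolding eq A_def C_def .
qed

lemma staircase:
  fixes v B :: real and n :: nat
  assumes "0 \<le> v" "v \<le> B" "0 < B" "0 < n"
  shows "v - B / n \<le> (B / n) * (\<Sum>k\<in>{1..n}. (if real k * B / n \<le> v then 1 else 0))"
    and "(B / n) * (\<Sum>k\<in>{1..n}. (if real k * B / n \<le> v then 1 else 0)) \<le> v"
proof -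
  define j where "j = nat \<lfloor>v * n / B\<rfloor>"
  have vn0: "0 \<le> v * n / B" using assms by simp
  have vnn: "v * n / B \<le> n" using assms by (simp add: field_simps)
  have fl0: "0 \<le> \<lfloor>v * n / B\<rfloor>" using vn0 by simp
  have jle: "real j \<le> v * n / B" unfolding j_def using fl0 by simp
  have jgt: "v * n / B < real j + 1" unfolding j_def using fl0 by linarith
  have jn: "j \<le> n" using jle vnn by linarith
  have iff: "real k * B / n \<le> v \<longleftrightarrow> k \<le> j" for k :: nat
  proof -
    have "real k * B / n \<le> v \<longleftrightarrow> real k \<le> v * n / B" using assms by (simp add: field_simps)
    also have "\<dots> \<longleftrightarrow> int k \<le> \<lfloor>v * n / B\<rfloor>" by (simp add: le_floor_iff)
    also have "\<dots> \<longleftrightarrow> k \<le> j" unfolding j_def using fl0 by linarith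
    finally show ?thesis .
  qed
  have "(\<Sum>k\<in>{1..n}. (if real k * B / n \<le> v then 1 else 0::real)) = (\<Sum>k\<in>{1..n}. (if k \<le> j then 1 else 0))"
    using iff by simp
  also have "\<dots> = real (card {k\<in>{1..n}. k \<le> j})"
    by (simp add: sum.If_cases) (rule arg_cong[where f=card], auto)
  also have "{k\<in>{1..n}. k \<le> j} = {1..j}" using jn by auto
  finally have S: "(\<Sum>k\<in>{1..n}. (if real k * B / n \<le> v then 1 else 0::real)) = real j" by simp
  show "v - B / n \<le> (B / n) * (\<Sum>k\<in>{1..n}. (if real k * B / n \<le> v then 1 else 0))"
  proof -
    have h: "v * n < B * (real j + 1)" using jgt assms by (simp add: field_simps)
    have h2: "v < B * (real j + 1) / n" using h assms by (simp add: field_simps)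
    have "B / n * j + B / n = B * (real j + 1) / n" using assms by (simp add: field_simps)
    then show ?thesis unfolding S using h2 by (simp add: algebra_simps)
  qed
  show "(B / n) * (\<Sum>k\<in>{1..n}. (if real k * B / n \<le> v then 1 else 0)) \<le> v"
    unfolding S using jle assms by (simp add: field_simps)
qed

lemma dom_G:
  fixes \<phi> P Q :: "real \<Rightarrow> real" and B :: real
  assumes [measurable]: "\<phi> \<in> borel_measurable lborel"
    and iP: "integrable lborel P" and iQ: "integrable lborel Q"
    and P0: "\<And>x. 0 \<le> P x" and Q0: "\<And>x. 0 \<le> Q x"
    and phi0: "\<And>x. 0 \<le> \<phi> x" and phiB: "\<And>x. \<phi> x \<le> B"
    and lev: "\<And>c. c > 0 \<Longrightarrow> (\<integral>x. indicator {x. c \<le> \<phi> x} x * Q x \<partial>lborel)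
                 \<le> (\<integral>x. indicator {x. c \<le> \<phi> x} x * P x \<partial>lborel)"
  shows "(\<integral>x. \<phi> x * Q x \<partial>lborel) \<le> (\<integral>x. \<phi> x * P x \<partial>lborel)"
proof -
  have [measurable]: "P \<in> borel_measurable lborel" "Q \<in> borel_measurable lborel"
    using iP iQ by (auto dest: borel_measurable_integrable)
  have B0: "0 \<le> B" using phi0[of 0] phiB[of 0] by simp
  have intphi: "integrable lborel (\<lambda>x. \<phi> x * R x)" if iR: "integrable lborel R" and R0: "\<And>x. 0 \<le> R x" for R
  proof (rule Bochner_Integration.integrable_bound[OF integrable_mult_right[OF iR, of B]])
    show "(\<lambda>x. \<phi> x * R x) \<in> borel_measurable lborel"
      using iR by (auto dest: borel_measurable_integrable)
    show "AE x in lborel. norm (\<phi> x * R x) \<le> norm (B * R x)"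
      using phi0 phiB R0 B0 by (auto simp: abs_mult intro!: mult_right_mono)
  qed
  show ?thesis
  proof (cases "B = 0")
    case True
    then have "\<And>x. \<phi> x = 0" using phi0 phiB by (meson order_antisym)
    then show ?thesis by simp
  next
    case False
    then have Bp: "B > 0" using B0 by simp
    define D where "D = (\<integral>x. \<phi> x * Q x \<partial>lborel) - (\<integral>x. \<phi> x * P x \<partial>lborel)"
    define IQ where "IQ = (\<integral>x. Q x \<partial>lborel)"
    have indR: "integrable lborel (\<lambda>x. indicator {x. c \<le> \<phi> x} x * R x)"
      if iR: "integrable lborel R" for R :: "real \<Rightarrow> real" and c
    proof -
      have "{x. c \<le> \<phi> x} \<in> sets lborel" by measurable
      then show ?thesis using integrable_mult_indicator[of "{x. c \<le> \<phi> x}" lborel R] iR by simp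
    qed
    have key: "D \<le> B / n * IQ" if n0: "0 < n" for n :: nat
    proof -
      define s where "s x = (\<Sum>k\<in>{1..n}. indicator {x. real k * B / n \<le> \<phi> x} x::real)" for x
      have sif: "s x = (\<Sum>k\<in>{1..n}. (if real k * B / n \<le> \<phi> x then 1 else 0::real))" for x
        unfolding s_def by (rule sum.cong) (auto simp: indicator_def)
      have seq: "(\<lambda>x. (B / n * s x) * R x) = (\<lambda>x. B / n * (\<Sum>k\<in>{1..n}. indicator {x. real k * B / n \<le> \<phi> x} x * R x))"
        for R :: "real \<Rightarrow> real"
        unfolding s_def by (auto simp: sum_distrib_right mult.assoc)
      have sint: "(\<integral>x. (B / n * s x) * R x \<partial>lborel) =
          B / n * (\<Sum>k\<in>{1..n}. (\<integral>x. indicator {x. real k * B / n \<le> \<phi> x} x * R x \<partial>lborel))"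
        if iR: "integrable lborel R" for R :: "real \<Rightarrow> real"
      proof -
        have "(\<integral>x. (B / n * s x) * R x \<partial>lborel) =
            B / n * (\<integral>x. (\<Sum>k\<in>{1..n}. indicator {x. real k * B / n \<le> \<phi> x} x * R x) \<partial>lborel)"
          by (simp only: seq integral_mult_right_zero)
        also have "(\<integral>x. (\<Sum>k\<in>{1..n}. indicator {x. real k * B / n \<le> \<phi> x} x * R x) \<partial>lborel)
            = (\<Sum>k\<in>{1..n}. (\<integral>x. indicator {x. real k * B / n \<le> \<phi> x} x * R x \<partial>lborel))"
          by (rule Bochner_Integration.integral_sum) (use indR[OF iR] in auto)
        finally show ?thesis .
      qed
      have sR: "integrable lborel (\<lambda>x. (B / n * s x) * R x)" if iR: "integrable lborel R" for R :: "real \<Rightarrow> real"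
      proof -
        have "integrable lborel (\<lambda>x. \<Sum>k\<in>{1..n}. indicator {x. real k * B / n \<le> \<phi> x} x * R x)"
          by (rule Bochner_Integration.integrable_sum) (rule indR[OF iR])
        then show ?thesis by (simp only: seq) (rule integrable_mult_right)
      qed
      have st1: "\<phi> x - B / n \<le> B / n * s x" for x
        unfolding sif using staircase(1)[OF phi0 phiB Bp n0] .
      have st2: "B / n * s x \<le> \<phi> x" for x
        unfolding sif using staircase(2)[OF phi0 phiB Bp n0] .
      have "(\<integral>x. \<phi> x * Q x \<partial>lborel) - B / n * IQ = (\<integral>x. (\<phi> x - B / n) * Q x \<partial>lborel)"
        unfolding IQ_def using intphi[OF iQ Q0] iQ by (simp add: algebra_simps)
      also have "\<dots> \<le> (\<integral>x. (B / n * s x) * Q x \<partial>lborel)"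
      proof (rule integral_mono)
        have "integrable lborel (\<lambda>x. \<phi> x * Q x - B / n * Q x)"
          using intphi[OF iQ Q0] iQ by auto
        then show "integrable lborel (\<lambda>x. (\<phi> x - B / n) * Q x)" by (simp add: algebra_simps)
        show "integrable lborel (\<lambda>x. (B / n * s x) * Q x)" by (rule sR[OF iQ])
        show "(\<phi> x - B / n) * Q x \<le> (B / n * s x) * Q x" for x
          by (rule mult_right_mono[OF st1 Q0])
      qed
      also have "\<dots> \<le> (\<integral>x. (B / n * s x) * P x \<partial>lborel)"
        unfolding sint[OF iQ] sint[OF iP] using Bp
        by (intro mult_left_mono sum_mono lev) auto
      also have "\<dots> \<le> (\<integral>x. \<phi> x * P x \<partial>lborel)"
        by (rule integral_mono[OF sR[OF iP] intphi[OF iP P0]]) (rule mult_right_mono[OF st2 P0])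
      finally show ?thesis unfolding D_def by simp
    qed
    show ?thesis
    proof (rule ccontr)
      assume "\<not> ?thesis"
      then have Dp: "D > 0" unfolding D_def by simp
      obtain n :: nat where n: "B * IQ / D < n" using reals_Archimedean2 by blast
      have IQ0: "IQ \<ge> 0" unfolding IQ_def using Q0 by simp
      have n0: "0 < n" using n Bp IQ0 Dp
        by (metis divide_nonneg_pos mult_nonneg_nonneg of_nat_0_less_iff order.strict_trans2 le_less)
      have "B * IQ < n * D" using n Dp by (simp add: field_simps)
      moreover have "D * n \<le> B * IQ" using key[OF n0] n0 by (simp add: field_simps)
      ultimately show False by (simp add: algebra_simps)
    qed
  qed
qed



lemma mono_meas: "mono (\<phi>::real\<Rightarrow>real) \<Longrightarrow> \<phi> \<in> borel_measurable lborel"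
  using borel_measurable_mono by (simp add: measurable_lborel1)

lemma sint_eq_closed:
  fixes g :: "real \<Rightarrow> real" and L1 L2 :: "real set"
  assumes "(L1 - L2) \<union> (L2 - L1) \<subseteq> {t}"
  shows "(LINT x:L1|lborel. g x) = (LINT x:L2|lborel. g x)"
  by (rule set_integral_discrete_difference[where X="{t}"]) (use assms in auto)

lemma upset_levels:
  fixes \<phi> :: "real \<Rightarrow> real"
  assumes "mono \<phi>" and L: "L = {x\<in>{0..1}. c \<le> \<phi> x}" and ne: "L \<noteq> {}"
  shows "\<exists>t\<in>{0..1}. {t<..1} \<subseteq> L \<and> L \<subseteq> {t..1}"
proof -
  have bdd: "bdd_below L" unfolding L by (auto intro: bdd_belowI[of _ 0])
  define t where "t = Inf L"
  have t0: "0 \<le> t" unfolding t_def using ne by (intro cInf_greatest) (auto simp: L)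
  have lower: "t \<le> x" if "x \<in> L" for x unfolding t_def using that bdd by (rule cInf_lower)
  obtain x0 where "x0 \<in> L" using ne by blast
  then have t1: "t \<le> 1" using lower[of x0] by (auto simp: L)
  have "{t<..1} \<subseteq> L"
  proof
    fix y assume y: "y \<in> {t<..1}"
    then obtain x where x: "x \<in> L" "x < y" using cInf_less_iff[OF ne bdd] unfolding t_def by auto
    then have "c \<le> \<phi> y" using \<open>mono \<phi>\<close> by (auto simp: L dest: monoD[of _ x y])
    then show "y \<in> L" using y t0 by (auto simp: L)
  qed
  moreover have "L \<subseteq> {t..1}" using lower by (auto simp: L)
  ultimately show ?thesis using t0 t1 by auto
qed

lemma downset_levels:
  fixes \<phi> :: "real \<Rightarrow> real"
  assumes "antimono \<phi>" and L: "L = {x\<in>{0..1}. c \<le> \<phi> x}" and ne: "L \<noteq> {}"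
  shows "\<exists>t\<in>{0..1}. {0..<t} \<subseteq> L \<and> L \<subseteq> {0..t}"
proof -
  have bdd: "bdd_above L" unfolding L by (auto intro: bdd_aboveI[of _ 1])
  define t where "t = Sup L"
  have t1: "t \<le> 1" unfolding t_def using ne by (intro cSup_least) (auto simp: L)
  have upper: "x \<le> t" if "x \<in> L" for x unfolding t_def using that bdd by (rule cSup_upper)
  obtain x0 where "x0 \<in> L" using ne by blast
  then have t0: "0 \<le> t" using upper[of x0] by (auto simp: L)
  have "{0..<t} \<subseteq> L"
  proof
    fix y assume y: "y \<in> {0..<t}"
    then obtain x where x: "x \<in> L" "y < x" using less_cSup_iff[OF ne bdd] unfolding t_def by auto
    then have "c \<le> \<phi> y" using \<open>antimono \<phi>\<close> by (auto simp: L dest: antimonoD[of _ y x])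
    then show "y \<in> L" using y t1 by (auto simp: L)
  qed
  moreover have "L \<subseteq> {0..t}" using upper by (auto simp: L)
  ultimately show ?thesis using t0 t1 by auto
qed

lemma ind_int_eq:
  fixes q :: "real \<Rightarrow> real"
  shows "(\<integral>x. indicator A x * (indicator B x * q x) \<partial>lborel) = (LINT x:{x\<in>B. x \<in> A}|lborel. q x)"
  unfolding set_lebesgue_integral_def
  by (rule Bochner_Integration.integral_cong) (auto simp: indicator_def)

lemma ind_int_eq2:
  fixes q \<phi> :: "real \<Rightarrow> real"
  shows "(\<integral>x. \<phi> x * (indicator B x * q x) \<partial>lborel) = (LINT x:B|lborel. \<phi> x * q x)"
  unfolding set_lebesgue_integral_def
  by (rule Bochner_Integration.integral_cong) (auto simp: indicator_def)

lemma dom_gen: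
  fixes \<phi> p q :: "real \<Rightarrow> real"
  assumes [measurable]: "\<phi> \<in> borel_measurable lborel" and phi0: "\<And>x. 0 \<le> \<phi> x" and phiB: "\<And>x. \<phi> x \<le> B"
    and [measurable]: "p \<in> borel_measurable lborel" "q \<in> borel_measurable lborel"
    and sp: "set_integrable lborel {0..1} p" and sq: "set_integrable lborel {0..1} q"
    and p0: "\<And>x. x \<in> {0..1} \<Longrightarrow> 0 \<le> p x" and q0: "\<And>x. x \<in> {0..1} \<Longrightarrow> 0 \<le> q x"
    and H: "\<And>c. c > 0 \<Longrightarrow> (LINT x:{x\<in>{0..1}. c \<le> \<phi> x}|lborel. q x) \<le> (LINT x:{x\<in>{0..1}. c \<le> \<phi> x}|lborel. p x)"
  shows "(LINT x:{0..1}|lborel. \<phi> x * q x) \<le> (LINT x:{0..1}|lborel. \<phi> x * p x)"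
proof -
  have "(\<integral>x. \<phi> x * (indicator {0..1} x * q x) \<partial>lborel) \<le> (\<integral>x. \<phi> x * (indicator {0..1} x * p x) \<partial>lborel)"
  proof (rule dom_G[OF _ _ _ _ _ phi0 phiB])
    show "integrable lborel (\<lambda>x. indicator {0..1} x * p x)" using sp by (simp add: set_integrable_def)
    show "integrable lborel (\<lambda>x. indicator {0..1} x * q x)" using sq by (simp add: set_integrable_def)
    show "0 \<le> indicator {0..1} x * p x" for x using p0[of x] by (auto simp: indicator_def)
    show "0 \<le> indicator {0..1} x * q x" for x using q0[of x] by (auto simp: indicator_def)
    show "(\<integral>x. indicator {x. c \<le> \<phi> x} x * (indicator {0..1} x * q x) \<partial>lborel)
        \<le> (\<integral>x. indicator {x. c \<le> \<phi> x} x * (indicator {0..1} x * p x) \<partial>lborel)" if "c > 0" for c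
      unfolding ind_int_eq using H[OF that] by simp
  qed simp
  then show ?thesis unfolding ind_int_eq2 .
qed

lemma dom_up:
  fixes \<phi> p q :: "real \<Rightarrow> real"
  assumes mono: "mono \<phi>" and phi0: "\<And>x. 0 \<le> \<phi> x" and phiB: "\<And>x. \<phi> x \<le> B"
    and [measurable]: "p \<in> borel_measurable lborel" "q \<in> borel_measurable lborel"
    and sp: "set_integrable lborel {0..1} p" and sq: "set_integrable lborel {0..1} q"
    and p0: "\<And>x. x \<in> {0..1} \<Longrightarrow> 0 \<le> p x" and q0: "\<And>x. x \<in> {0..1} \<Longrightarrow> 0 \<le> q x"
    and H: "\<And>t c. t \<in> {0..1} \<Longrightarrow> c > 0 \<Longrightarrow> {t<..1} \<subseteq> {x\<in>{0..1}. c \<le> \<phi> x} \<Longrightarrow>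
              {x\<in>{0..1}. c \<le> \<phi> x} \<subseteq> {t..1} \<Longrightarrow>
              (LINT x:{t..1}|lborel. q x) \<le> (LINT x:{t..1}|lborel. p x)"
  shows "(LINT x:{0..1}|lborel. \<phi> x * q x) \<le> (LINT x:{0..1}|lborel. \<phi> x * p x)"
proof (rule dom_gen[OF mono_meas[OF mono] phi0 phiB _ _ sp sq p0 q0])
  fix c :: real assume c: "c > 0"
  define L where "L = {x\<in>{0..1}. c \<le> \<phi> x}"
  show "(LINT x:{x\<in>{0..1}. c \<le> \<phi> x}|lborel. q x) \<le> (LINT x:{x\<in>{0..1}. c \<le> \<phi> x}|lborel. p x)"
  proof (cases "L = {}")
    case True
    then have e: "{x\<in>{0..1}. c \<le> \<phi> x} = {}" using L_def by auto
    show ?thesis unfolding e by (simp add: set_lebesgue_integral_def)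
  next
    case False
    then obtain t where t: "t \<in> {0..1}" "{t<..1} \<subseteq> L" "L \<subseteq> {t..1}"
      using upset_levels[OF mono L_def] by blast
    have t': "t \<in> {0..1}" "{t<..1} \<subseteq> {x\<in>{0..1}. c \<le> \<phi> x}" "{x\<in>{0..1}. c \<le> \<phi> x} \<subseteq> {t..1}"
      using t L_def by auto
    have d: "({x\<in>{0..1}. c \<le> \<phi> x} - {t..1}) \<union> ({t..1} - {x\<in>{0..1}. c \<le> \<phi> x}) \<subseteq> {t}" using t' by (auto simp: subset_iff) (metis less_eq_real_def)
    show ?thesis unfolding sint_eq_closed[OF d] using H[OF t'(1) c t'(2) t'(3)] .
  qed
qed simp_all

lemma dom_down:
  fixes \<phi> p q :: "real \<Rightarrow> real"
  assumes mono: "antimono \<phi>" and phi0: "\<And>x. 0 \<le> \<phi> x" and phiB: "\<And>x. \<phi> x \<le> B"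
    and [measurable]: "p \<in> borel_measurable lborel" "q \<in> borel_measurable lborel"
    and sp: "set_integrable lborel {0..1} p" and sq: "set_integrable lborel {0..1} q"
    and p0: "\<And>x. x \<in> {0..1} \<Longrightarrow> 0 \<le> p x" and q0: "\<And>x. x \<in> {0..1} \<Longrightarrow> 0 \<le> q x"
    and H: "\<And>t c. t \<in> {0..1} \<Longrightarrow> c > 0 \<Longrightarrow> {0..<t} \<subseteq> {x\<in>{0..1}. c \<le> \<phi> x} \<Longrightarrow>
              {x\<in>{0..1}. c \<le> \<phi> x} \<subseteq> {0..t} \<Longrightarrow>
              (LINT x:{0..t}|lborel. q x) \<le> (LINT x:{0..t}|lborel. p x)"
  shows "(LINT x:{0..1}|lborel. \<phi> x * q x) \<le> (LINT x:{0..1}|lborel. \<phi> x * p x)"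
proof -
  have "mono (\<lambda>x. - \<phi> x)" using mono by (auto simp: mono_def antimono_def)
  then have m: "(\<lambda>x. - \<phi> x) \<in> borel_measurable lborel" by (rule mono_meas)
  have "(\<lambda>x. - (- \<phi> x)) \<in> borel_measurable lborel" using m by measurable
  then have mm: "\<phi> \<in> borel_measurable lborel" by simp
  show ?thesis
  proof (rule dom_gen[OF mm phi0 phiB _ _ sp sq p0 q0])
    fix c :: real assume c: "c > 0"
    define L where "L = {x\<in>{0..1}. c \<le> \<phi> x}"
    show "(LINT x:{x\<in>{0..1}. c \<le> \<phi> x}|lborel. q x) \<le> (LINT x:{x\<in>{0..1}. c \<le> \<phi> x}|lborel. p x)"
      proof (cases "L = {}")
      case True
    then have e: "{x\<in>{0..1}. c \<le> \<phi> x} = {}" using L_def by auto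
    show ?thesis unfolding e by (simp add: set_lebesgue_integral_def)
    next
      case False
      then obtain t where t: "t \<in> {0..1}" "{0..<t} \<subseteq> L" "L \<subseteq> {0..t}"
        using downset_levels[OF mono L_def] by blast
      have t': "t \<in> {0..1}" "{0..<t} \<subseteq> {x\<in>{0..1}. c \<le> \<phi> x}" "{x\<in>{0..1}. c \<le> \<phi> x} \<subseteq> {0..t}"
        using t L_def by auto
      have d: "({x\<in>{0..1}. c \<le> \<phi> x} - {0..t}) \<union> ({0..t} - {x\<in>{0..1}. c \<le> \<phi> x}) \<subseteq> {t}" using t' by (auto simp: subset_iff)
      show ?thesis unfolding sint_eq_closed[OF d] using H[OF t'(1) c t'(2) t'(3)] .
    qed
  qed simp_all
qed



locale ivs =
  fixes f :: "real \<Rightarrow> real \<Rightarrow> real"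
    and x1 tx1 tx2 x2 w1 w2 C_F c_f c_W C_W :: real
  assumes pts: "0 \<le> x1" "x1 < tx1" "tx1 < tx2" "tx2 < x2" "x2 \<le> 1"
      and wpts: "0 < w1" "w1 < w2" "w2 < 1"
      and dens: "joint_density f"
      and A1a: "\<And>x w' w''. x \<in> {0<..<1} \<Longrightarrow> w' \<in> {0<..<1} \<Longrightarrow> w'' \<in> {0<..<1} \<Longrightarrow>
                 w' \<le> w'' \<Longrightarrow> FXgW f x w' \<ge> FXgW f x w''"
      and CF: "C_F > 1"
      and A1b1: "\<And>x. x \<in> {0<..<x2} \<Longrightarrow> FXgW f x w1 \<ge> C_F * FXgW f x w2"
      and A1b2: "\<And>x. x \<in> {x1<..<1} \<Longrightarrow> C_F * (1 - FXgW f x w1) \<le> 1 - FXgW f x w2"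
      and cf: "c_f > 0" and A2ii: "\<And>x w. x \<in> {x1..x2} \<Longrightarrow> w \<in> {w1, w2} \<Longrightarrow> fXgW f x w \<ge> c_f"
      and cW: "0 < c_W" and A2iii: "\<And>w. w \<in> {0..1} \<Longrightarrow> c_W \<le> fW f w \<and> fW f w \<le> C_W"
begin

lemma fjoint[measurable]: "(\<lambda>(x,w). f x w) \<in> borel_measurable (lborel \<Otimes>\<^sub>M lborel)"
  using dens by (simp add: joint_density_def)

lemma fmeas[measurable]: "(\<lambda>x. f x w) \<in> borel_measurable lborel"
proof -
  have "(\<lambda>x. (\<lambda>(x,w). f x w) (x, w)) \<in> borel_measurable lborel"
    by (rule measurable_compose[OF measurable_Pair2' fjoint]) simp
  then show ?thesis by simp
qed

lemma f0: "x \<in> {0..1} \<Longrightarrow> w \<in> {0..1} \<Longrightarrow> 0 \<le> f x w"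
  using dens by (simp add: joint_density_def)

lemma fWpos: "w \<in> {0..1} \<Longrightarrow> fW f w > 0"
  using A2iii[of w] cW by auto

lemma fint: "w \<in> {0..1} \<Longrightarrow> set_integrable lborel {0..1} (\<lambda>x. f x w)"
proof (rule ccontr)
  assume w: "w \<in> {0..1}" and n: "\<not> set_integrable lborel {0..1} (\<lambda>x. f x w)"
  have "fW f w = 0"
    unfolding fW_def set_lebesgue_integral_def
    by (rule not_integrable_integral_eq[OF n[unfolded set_integrable_def]])
  then show False using fWpos[OF w] by simp
qed

definition pd :: "real \<Rightarrow> real \<Rightarrow> real" where "pd w x = f x w / fW f w"

definition I :: "real \<Rightarrow> (real \<Rightarrow> real) \<Rightarrow> real" where
  "I w \<phi> = (LINT x:{0..1}|lborel. \<phi> x * pd w x)"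

lemma pd_meas[measurable]: "pd w \<in> borel_measurable lborel"
  unfolding pd_def[abs_def] by measurable

lemma pd0: "x \<in> {0..1} \<Longrightarrow> w \<in> {0..1} \<Longrightarrow> 0 \<le> pd w x"
  unfolding pd_def using f0 fWpos by (simp add: less_imp_le)

lemma pd_int: "w \<in> {0..1} \<Longrightarrow> set_integrable lborel {0..1} (pd w)"
  unfolding pd_def[abs_def] using fint by (auto intro: set_integrable_divide)

lemma pd_int_sub: "w \<in> {0..1} \<Longrightarrow> S \<in> sets lborel \<Longrightarrow> S \<subseteq> {0..1} \<Longrightarrow> set_integrable lborel S (pd w)"
  using pd_int set_integrable_subset by blast

lemma total: "w \<in> {0..1} \<Longrightarrow> (LINT x:{0..1}|lborel. pd w x) = 1"
  unfolding pd_def using fWpos[of w] by (simp add: fW_def[symmetric])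

lemma F_eq: "FXgW f t w = (LINT x:{0..t}|lborel. pd w x)"
  unfolding pd_def FXgW_def by simp

lemma F0: "FXgW f 0 w = 0"
proof -
  have d: "({0..0::real} - {}) \<union> ({} - {0..0}) \<subseteq> {0}" by auto
  show ?thesis unfolding F_eq sint_eq_closed[OF d] by (simp add: set_lebesgue_integral_def)
qed

lemma F1: "w \<in> {0..1} \<Longrightarrow> FXgW f 1 w = 1"
  unfolding F_eq using total by simp

lemma tail: assumes t: "t \<in> {0..1}" and w: "w \<in> {0..1}"
  shows "(LINT x:{t..1}|lborel. pd w x) = 1 - FXgW f t w"
proof -
  have "1 = (LINT x:{0..t} \<union> {t<..1}|lborel. pd w x)"
    using total[OF w] t by (simp add: ivl_disj_un)
  also have "\<dots> = (LINT x:{0..t}|lborel. pd w x) + (LINT x:{t<..1}|lborel. pd w x)"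
    using t by (intro set_integral_Un pd_int_sub[OF w]) auto
  also have "(LINT x:{t<..1}|lborel. pd w x) = (LINT x:{t..1}|lborel. pd w x)"
    by (rule sint_eq_closed[where t=t]) auto
  finally show ?thesis unfolding F_eq by simp
qed

lemma I_int:
  assumes [measurable]: "\<phi> \<in> borel_measurable lborel" and K: "\<And>x. \<bar>\<phi> x\<bar> \<le> K" and w: "w \<in> {0..1}"
  shows "set_integrable lborel {0..1} (\<lambda>x. \<phi> x * pd w x)"
proof (rule set_integrable_bound[OF set_integrable_mult_right[OF pd_int[OF w], of K]])
  show "set_borel_measurable lborel {0..1} (\<lambda>x. \<phi> x * pd w x)"
    unfolding set_borel_measurable_def by measurable
  show "AE x in lborel. x \<in> {0..1} \<longrightarrow> norm (\<phi> x * pd w x) \<le> norm (K * pd w x)"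
  proof (intro AE_I2 impI)
    fix x :: real assume x: "x \<in> {0..1}"
    have "\<bar>\<phi> x\<bar> \<le> \<bar>K\<bar>" using K[of x] by linarith
    then show "norm (\<phi> x * pd w x) \<le> norm (K * pd w x)"
      using pd0[OF x w] by (simp add: abs_mult mult_right_mono)
  qed
qed

lemma I_add:
  assumes "set_integrable lborel {0..1} (\<lambda>x. \<phi> x * pd w x)" "set_integrable lborel {0..1} (\<lambda>x. \<psi> x * pd w x)"
  shows "I w (\<lambda>x. \<phi> x + \<psi> x) = I w \<phi> + I w \<psi>"
  unfolding I_def using assms by (simp add: distrib_right)

lemma I_diff:
  assumes "set_integrable lborel {0..1} (\<lambda>x. \<phi> x * pd w x)" "set_integrable lborel {0..1} (\<lambda>x. \<psi> x * pd w x)"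
  shows "I w (\<lambda>x. \<phi> x - \<psi> x) = I w \<phi> - I w \<psi>"
  unfolding I_def using assms by (simp add: left_diff_distrib)

lemma I_const: "w \<in> {0..1} \<Longrightarrow> I w (\<lambda>x. c) = c"
  unfolding I_def using total by simp

lemma I_cmult: "I w (\<lambda>x. c * \<phi> x) = c * I w \<phi>"
  unfolding I_def by (simp add: mult.assoc)

lemma dom_w:
  assumes m: "mono m" and K: "\<And>x. \<bar>m x\<bar> \<le> K"
    and w: "w' \<in> {0<..<1}" "w'' \<in> {0<..<1}" "w' \<le> w''"
  shows "I w' m \<le> I w'' m"
proof -
  have w': "w' \<in> {0..1}" and w'': "w'' \<in> {0..1}" using w by auto
  have mm[measurable]: "m \<in> borel_measurable lborel" by (rule mono_meas[OF m])
  define \<phi> where "\<phi> x = m x + K" for x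
  have pm: "mono \<phi>" using m unfolding \<phi>_def mono_def by auto
  have p0: "0 \<le> \<phi> x" for x using K[of x] unfolding \<phi>_def by auto
  have pB: "\<phi> x \<le> 2 * K" for x using K[of x] unfolding \<phi>_def by auto
  have "(LINT x:{0..1}|lborel. \<phi> x * pd w' x) \<le> (LINT x:{0..1}|lborel. \<phi> x * pd w'' x)"
  proof (rule dom_up[OF pm p0 pB _ _ pd_int[OF w''] pd_int[OF w'] pd0[OF _ w''] pd0[OF _ w']])
    fix t c :: real assume t: "t \<in> {0..1}"
    show "(LINT x:{t..1}|lborel. pd w' x) \<le> (LINT x:{t..1}|lborel. pd w'' x)"
      unfolding tail[OF t w'] tail[OF t w'']
    proof (cases "t = 0 \<or> t = 1")
      case True then show "1 - FXgW f t w' \<le> 1 - FXgW f t w''"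
        using F0 F1[OF w'] F1[OF w''] by auto
    next
      case False then have "t \<in> {0<..<1}" using t by auto
      then show "1 - FXgW f t w' \<le> 1 - FXgW f t w''" using A1a[of t w' w''] w by auto
    qed
  qed simp_all
  then have "I w' \<phi> \<le> I w'' \<phi>" unfolding I_def .
  moreover have "I w \<phi> = I w m + K" if w: "w \<in> {0..1}" for w
    unfolding \<phi>_def[abs_def]
    by (subst I_add) (use I_int[OF mm K w] I_int[of "\<lambda>x. K" "\<bar>K\<bar>"] w I_const[OF w] in auto)
  ultimately show ?thesis using w' w'' by simp
qed

lemma w12: "w1 \<in> {0..1}" "w2 \<in> {0..1}" using wpts by auto

lemma dom_b2:
  assumes m: "mono \<phi>" and p0: "\<And>x. 0 \<le> \<phi> x" and pB: "\<And>x. \<phi> x \<le> B"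
    and z: "\<And>x. x \<le> tx1 \<Longrightarrow> \<phi> x = 0"
  shows "C_F * I w1 \<phi> \<le> I w2 \<phi>"
proof -
  have "(LINT x:{0..1}|lborel. \<phi> x * (C_F * pd w1 x)) \<le> (LINT x:{0..1}|lborel. \<phi> x * pd w2 x)"
  proof (rule dom_up[OF m p0 pB _ _ pd_int[OF w12(2)] _ pd0[OF _ w12(2)]])
    show "set_integrable lborel {0..1} (\<lambda>x. C_F * pd w1 x)"
      using pd_int[OF w12(1)] by auto
    show "0 \<le> C_F * pd w1 x" if "x \<in> {0..1}" for x using pd0[OF that w12(1)] CF by simp
    fix t c :: real assume t: "t \<in> {0..1}" and c: "c > 0" and sub: "{t<..1} \<subseteq> {x\<in>{0..1}. c \<le> \<phi> x}"
    have tt: "tx1 \<le> t"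
    proof (rule ccontr)
      assume "\<not> tx1 \<le> t"
      then have "(t + tx1) / 2 \<in> {t<..1}" using pts by auto
      then have "c \<le> \<phi> ((t + tx1) / 2)" using subsetD[OF sub] by blast
      moreover have "\<phi> ((t + tx1) / 2) = 0" using z \<open>\<not> tx1 \<le> t\<close> by auto
      ultimately show False using c by simp
    qed
    have "C_F * (1 - FXgW f t w1) \<le> 1 - FXgW f t w2"
    proof (cases "t = 1")
      case True then show ?thesis using F1 w12 by simp
    next
      case False then show ?thesis using A1b2[of t] t tt pts by auto
    qed
    then show "(LINT x:{t..1}|lborel. C_F * pd w1 x) \<le> (LINT x:{t..1}|lborel. pd w2 x)"
      using tail[OF t w12(1)] tail[OF t w12(2)] by simp
  qed simp_all
  then show ?thesis unfolding I_def by (simp add: mult.left_commute)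
qed

lemma dom_b1:
  assumes m: "antimono \<phi>" and p0: "\<And>x. 0 \<le> \<phi> x" and pB: "\<And>x. \<phi> x \<le> B"
    and z: "\<And>x. tx2 \<le> x \<Longrightarrow> \<phi> x = 0"
  shows "C_F * I w2 \<phi> \<le> I w1 \<phi>"
proof -
  have "(LINT x:{0..1}|lborel. \<phi> x * (C_F * pd w2 x)) \<le> (LINT x:{0..1}|lborel. \<phi> x * pd w1 x)"
  proof (rule dom_down[OF m p0 pB _ _ pd_int[OF w12(1)] _ pd0[OF _ w12(1)]])
    show "set_integrable lborel {0..1} (\<lambda>x. C_F * pd w2 x)"
      using pd_int[OF w12(2)] by auto
    show "0 \<le> C_F * pd w2 x" if "x \<in> {0..1}" for x using pd0[OF that w12(2)] CF by simp
    fix t c :: real assume t: "t \<in> {0..1}" and c: "c > 0" and sub: "{0..<t} \<subseteq> {x\<in>{0..1}. c \<le> \<phi> x}"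
    have tt: "t \<le> tx2"
    proof (rule ccontr)
      assume "\<not> t \<le> tx2"
      then have "(t + tx2) / 2 \<in> {0..<t}" using pts by auto
      then have "c \<le> \<phi> ((t + tx2) / 2)" using subsetD[OF sub] by blast
      moreover have "\<phi> ((t + tx2) / 2) = 0" using z \<open>\<not> t \<le> tx2\<close> by auto
      ultimately show False using c by simp
    qed
    have "C_F * FXgW f t w2 \<le> FXgW f t w1"
    proof (cases "t = 0")
      case True then show ?thesis using F0 by simp
    next
      case False then show ?thesis using A1b1[of t] t tt pts by auto
    qed
    then show "(LINT x:{0..t}|lborel. C_F * pd w2 x) \<le> (LINT x:{0..t}|lborel. pd w1 x)"
      unfolding F_eq by simp
  qed simp_all
  then show ?thesis unfolding I_def by (simp add: mult.left_commute)
qed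

lemma pd_cf: "x \<in> {x1..x2} \<Longrightarrow> w \<in> {w1, w2} \<Longrightarrow> c_f \<le> pd w x"
  using A2ii unfolding fXgW_def pd_def by simp

lemma lowb:
  assumes w: "w \<in> {w1, w2}" and ab: "x1 \<le> a" "a \<le> b" "b \<le> x2"
    and [measurable]: "\<phi> \<in> borel_measurable lborel" and K: "\<And>x. \<bar>\<phi> x\<bar> \<le> K"
    and p0: "\<And>x. x \<in> {0..1} \<Longrightarrow> 0 \<le> \<phi> x" and v: "0 \<le> v" and pv: "\<And>x. x \<in> {a..b} \<Longrightarrow> v \<le> \<phi> x"
  shows "v * c_f * (b - a) \<le> I w \<phi>"
proof -
  have w01: "w \<in> {0..1}" using w w12 by auto
  have sub: "{a..b} \<subseteq> {0..1}" using ab pts by auto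
  have i1: "(LINT x:{0..1}|lborel. indicator {a..b} x) = (\<integral>x. indicator {a..b} x \<partial>lborel :: real)"
    unfolding set_lebesgue_integral_def
    by (rule Bochner_Integration.integral_cong) (use sub in \<open>auto simp: indicator_def\<close>)
  have i2: "(\<integral>x. indicator {a..b} x \<partial>lborel :: real) = b - a" using ab by simp
  have ind: "(LINT x:{0..1}|lborel. v * c_f * indicator {a..b} x) = v * c_f * (b - a)"
    using i1 i2 by simp
  have "(LINT x:{0..1}|lborel. v * c_f * indicator {a..b} x) \<le> I w \<phi>"
    unfolding I_def
  proof (rule set_integral_mono)
    show "set_integrable lborel {0..1} (\<lambda>x. v * c_f * indicator {a..b} x)"
    proof -
      have e: "(\<lambda>x. indicator {0..1} x *\<^sub>R indicator {a..b} x) = (indicator {a..b} :: real \<Rightarrow> real)"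
        using sub by (auto simp: indicator_def)
      have "set_integrable lborel {0..1} (\<lambda>x. indicator {a..b} x :: real)"
        unfolding set_integrable_def e by (rule integrable_real_indicator) (auto simp: emeasure_lborel_Icc_eq)
      then show ?thesis by (intro set_integrable_mult_right)
    qed
    show "set_integrable lborel {0..1} (\<lambda>x. \<phi> x * pd w x)" by (rule I_int[OF _ K w01]) simp
    fix x :: real assume x: "x \<in> {0..1}"
    show "v * c_f * indicator {a..b} x \<le> \<phi> x * pd w x"
    proof (cases "x \<in> {a..b}")
      case True
      then have "c_f \<le> pd w x" using pd_cf[OF _ w] ab by auto
      then show ?thesis using True pv[OF True] v cf by (simp add: mult_mono)
    next
      case False
      then show ?thesis using p0[OF x] pd0[OF x w01] by simp
    qed
  qed
  then show ?thesis using ind by linarith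
qed

end



lemma kC: fixes C e k :: real assumes "C > 1" "e > 0" "k = min (C - 1) 2 * e / 4"
  shows "k * C \<le> (C - 1) * e"
proof (cases "C - 1 \<le> 2")
  case True
  then have "k = (C - 1) * e / 4" using assms by simp
  moreover have "(C - 1) * e * C \<le> (C - 1) * e * 4" using True assms by (intro mult_left_mono) auto
  ultimately have "k * C * 4 = (C - 1) * e * C" by simp
  then show ?thesis using \<open>(C - 1) * e * C \<le> (C - 1) * e * 4\<close> by linarith
next
  case False
  then have "k = e / 2" using assms by simp
  have le: "C * e \<le> (2 * (C - 1)) * e" using False assms by (intro mult_right_mono) auto
  have kCe: "k * C = C * e / 2" using \<open>k = e / 2\<close> by simp
  have "(2 * (C - 1)) * e = 2 * ((C - 1) * e)" by simp
  then show ?thesis using le kCe by linarith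
qed

lemma arith_core:
  fixes C e s0 b k X1 X2 Y1 Y2 :: real
  assumes C: "C > 1" and e: "0 < e" "e \<le> 1/2" and k: "k = min (C - 1) 2 * e / 4"
    and s: "0 \<le> s0" "s0 \<le> b" and h3: "C * X1 \<le> X2" and h4: "C * Y2 \<le> Y1"
    and X2: "(b - s0) * e \<le> X2"
  shows "k * b \<le> s0 + X2 - Y2 \<or> k * b \<le> - (s0 + X1 - Y1)"
proof (rule ccontr)
  assume "\<not> ?thesis"
  then have h1: "s0 + X2 - k * b < Y2" and h2: "Y1 - X1 - s0 < k * b" by auto
  have C0: "C > 0" using C by simp
  have "C * (s0 + X2 - k * b) < C * Y2" using h1 C0 by simp
  then have a1: "C * (s0 + X2 - k * b) < Y1" using h4 by simp
  have a2: "X1 \<le> X2 / C" using h3 C0 by (simp add: field_simps)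
  define Z where "Z = (C - 1) * s0 + (C - 1 / C) * X2 - C * k * b"
  have "Z < k * b" unfolding Z_def using a1 a2 h2 by (simp add: algebra_simps)
  have "1 < C * C" using C by (rule less_1_mult[OF C])
  then have cc: "C - 1 / C > 0" using C by (simp add: field_simps)
  have b1: "(C - 1 / C) * ((b - s0) * e) \<le> (C - 1 / C) * X2" using X2 cc by (simp add: mult_left_mono)
  have ce: "(C - 1 / C) * e \<le> C - 1"
  proof -
    have "(C - 1 / C) * e = (C - 1) * ((C + 1) * e / C)" using C0 by (simp add: field_simps)
    also have "(C + 1) * e \<le> (C + 1) * (1/2)" using C e by (intro mult_left_mono) auto
    then have "(C + 1) * e / C \<le> 1" using C e C0 by (simp add: field_simps)
    then have "(C - 1) * ((C + 1) * e / C) \<le> (C - 1) * 1" using C by (intro mult_left_mono) auto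
    finally show ?thesis by simp
  qed
  have b2: "(C - 1 / C) * e * s0 \<le> (C - 1) * s0" using ce s by (simp add: mult_right_mono)
  have "Z \<ge> (C - 1 / C) * e * b - C * k * b"
    unfolding Z_def using b1 b2 by (simp add: algebra_simps)
  moreover have "(C + 1) * k * b \<le> (C - 1 / C) * e * b"
  proof -
    have "k * C \<le> (C - 1) * e" by (rule kC[OF C e(1) k])
    then have "(C + 1) * (k * C) \<le> (C + 1) * ((C - 1) * e)" using C by (intro mult_left_mono) auto
    moreover have "(C - 1 / C) * e * C = (C + 1) * ((C - 1) * e)" using C0 by (simp add: field_simps)
    ultimately have "((C + 1) * k) * C \<le> ((C - 1 / C) * e) * C" by (simp add: algebra_simps)
    then have "(C + 1) * k \<le> (C - 1 / C) * e" using C0 by simp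
    then show ?thesis using s by (intro mult_right_mono) auto
  qed
  ultimately have "Z \<ge> k * b" by (simp add: algebra_simps)
  then show False using \<open>Z < k * b\<close> by simp
qed


context ivs
begin

lemma decomp:
  assumes m: "mono m" and K: "\<And>x. \<bar>m x\<bar> \<le> K" and s: "m tx1 \<le> s0" "s0 \<le> m tx2"
  defines "\<phi> \<equiv> \<lambda>x. max (m x - s0) 0" and "\<psi> \<equiv> \<lambda>x. max (s0 - m x) 0"
  shows "I w1 m = s0 + I w1 \<phi> - I w1 \<psi>" "I w2 m = s0 + I w2 \<phi> - I w2 \<psi>"
    "C_F * I w1 \<phi> \<le> I w2 \<phi>" "C_F * I w2 \<psi> \<le> I w1 \<psi>" "0 \<le> I w1 \<phi>" "0 \<le> I w2 \<psi>"
    "(m tx2 - s0) * c_f * (x2 - tx2) \<le> I w2 \<phi>" "(s0 - m tx1) * c_f * (tx1 - x1) \<le> I w1 \<psi>"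
proof -
  have mm[measurable]: "m \<in> borel_measurable lborel" by (rule mono_meas[OF m])
  have pm[measurable]: "\<phi> \<in> borel_measurable lborel" unfolding \<phi>_def by measurable
  have cm[measurable]: "\<psi> \<in> borel_measurable lborel" unfolding \<psi>_def by measurable
  have s0K: "\<bar>s0\<bar> \<le> K" using s K[of tx1] K[of tx2] by linarith
  have p0: "0 \<le> \<phi> x" and pB: "\<phi> x \<le> 2 * K" and pK: "\<bar>\<phi> x\<bar> \<le> 2 * K" for x
    unfolding \<phi>_def using K[of x] s0K by auto
  have c0: "0 \<le> \<psi> x" and cB: "\<psi> x \<le> 2 * K" and cK: "\<bar>\<psi> x\<bar> \<le> 2 * K" for x
    unfolding \<psi>_def using K[of x] s0K by auto
  have pt: "m = (\<lambda>x. (s0 + \<phi> x) - \<psi> x)" unfolding \<phi>_def \<psi>_def by (rule ext) auto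
  have Ieq: "I w m = s0 + I w \<phi> - I w \<psi>" if w: "w \<in> {0..1}" for w
  proof -
    have i1: "set_integrable lborel {0..1} (\<lambda>x. (s0 + \<phi> x) * pd w x)"
      by (rule I_int[OF _ _ w, of _ "\<bar>s0\<bar> + 2 * K"]) (use pK in \<open>auto intro: abs_triangle_ineq[THEN order_trans]\<close>)
    have "I w m = I w (\<lambda>x. s0 + \<phi> x) - I w \<psi>"
      by (subst pt, rule I_diff[OF i1 I_int[OF cm cK w]])
    also have "I w (\<lambda>x. s0 + \<phi> x) = I w (\<lambda>x. s0) + I w \<phi>"
      by (rule I_add[OF I_int[of "\<lambda>x. s0" "\<bar>s0\<bar>"] I_int[OF pm pK w]]) (use w in auto)
    finally show ?thesis using I_const[OF w] by simp
  qed
  show "I w1 m = s0 + I w1 \<phi> - I w1 \<psi>" "I w2 m = s0 + I w2 \<phi> - I w2 \<psi>" using Ieq w12 by auto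
  have pmono: "mono \<phi>"
  proof (rule monoI)
    fix x y :: real assume "x \<le> y"
    then have "m x \<le> m y" by (rule monoD[OF m])
    then show "\<phi> x \<le> \<phi> y" unfolding \<phi>_def by (simp add: max_def)
  qed
  have cmono: "antimono \<psi>"
  proof (rule antimonoI)
    fix x y :: real assume "x \<le> y"
    then have "m x \<le> m y" by (rule monoD[OF m])
    then show "\<psi> y \<le> \<psi> x" unfolding \<psi>_def by (simp add: max_def)
  qed
  have pz: "\<phi> x = 0" if "x \<le> tx1" for x
  proof -
    have "m x \<le> m tx1" using that by (rule monoD[OF m])
    then show ?thesis using s unfolding \<phi>_def by (simp add: max_def)
  qed
  have cz: "\<psi> x = 0" if "tx2 \<le> x" for x
  proof -
    have "m tx2 \<le> m x" using that by (rule monoD[OF m])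
    then show ?thesis using s unfolding \<psi>_def by (simp add: max_def)
  qed
  show "C_F * I w1 \<phi> \<le> I w2 \<phi>" by (rule dom_b2[OF pmono p0 pB pz])
  show "C_F * I w2 \<psi> \<le> I w1 \<psi>" by (rule dom_b1[OF cmono c0 cB cz])
  show "0 \<le> I w1 \<phi>" unfolding I_def by (rule sint_nonneg) (use p0 pd0 w12 in auto)
  show "0 \<le> I w2 \<psi>" unfolding I_def by (rule sint_nonneg) (use c0 pd0 w12 in auto)
  show "(m tx2 - s0) * c_f * (x2 - tx2) \<le> I w2 \<phi>"
  proof (rule lowb[OF _ _ _ _ pm pK])
    fix x :: real assume x: "x \<in> {tx2..x2}"
    then have "m tx2 \<le> m x" by (intro monoD[OF m]) simp
    then show "m tx2 - s0 \<le> \<phi> x" unfolding \<phi>_def by (simp add: max_def)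
  next
    show "m tx2 - s0 \<ge> 0" using s by simp
    show "w2 \<in> {w1, w2}" by simp
    show "x1 \<le> tx2" "tx2 \<le> x2" "x2 \<le> x2" using pts by auto
    show "0 \<le> \<phi> x" for x by (rule p0)
  qed
  show "(s0 - m tx1) * c_f * (tx1 - x1) \<le> I w1 \<psi>"
  proof (rule lowb[OF _ _ _ _ cm cK])
    fix x :: real assume x: "x \<in> {x1..tx1}"
    then have "m x \<le> m tx1" by (intro monoD[OF m]) simp
    then show "s0 - m tx1 \<le> \<psi> x" unfolding \<psi>_def by (simp add: max_def)
  next
    show "s0 - m tx1 \<ge> 0" using s by simp
    show "w1 \<in> {w1, w2}" by simp
    show "x1 \<le> x1" "x1 \<le> tx1" "tx1 \<le> x2" using pts by auto
    show "0 \<le> \<psi> x" for x by (rule c0)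
  qed
qed

lemma ce: "c_f * min (tx1 - x1) (x2 - tx2) \<le> 1/2"
proof -
  have "1 * c_f * (x2 - x1) \<le> I w1 (\<lambda>x. 1)"
    by (rule lowb[of w1 x1 x2 "\<lambda>x. 1" 1 1]) (use pts in auto)
  then have "c_f * (x2 - x1) \<le> 1" using I_const[OF w12(1)] by simp
  moreover have "2 * min (tx1 - x1) (x2 - tx2) \<le> x2 - x1" using pts by (simp add: min_def)
  then have "c_f * (2 * min (tx1 - x1) (x2 - tx2)) \<le> c_f * (x2 - x1)" using cf by (intro mult_left_mono) auto
  ultimately show ?thesis by linarith
qed

lemma core:
  assumes m: "mono m" and K: "\<And>x. \<bar>m x\<bar> \<le> K"
  defines "k \<equiv> min (C_F - 1) 2 * (c_f * min (tx1 - x1) (x2 - tx2)) / 4"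
  shows "k * max \<bar>m tx1\<bar> \<bar>m tx2\<bar> \<le> I w2 m \<or> k * max \<bar>m tx1\<bar> \<bar>m tx2\<bar> \<le> - I w1 m"
proof -
  define e where "e = c_f * min (tx1 - x1) (x2 - tx2)"
  have e0: "0 < e" unfolding e_def using cf pts by simp
  have e1: "e \<le> 1/2" unfolding e_def by (rule ce)
  have kk: "k = min (C_F - 1) 2 * e / 4" unfolding k_def e_def ..
  have ab: "m tx1 \<le> m tx2" using pts by (intro monoD[OF m]) simp
  show ?thesis
  proof (cases "- m tx1 \<le> m tx2")
    case True
    define s0 where "s0 = max (m tx1) 0"
    have s: "m tx1 \<le> s0" "s0 \<le> m tx2" using True ab unfolding s0_def by auto
    note d = decomp[OF m K s]
    have M: "max \<bar>m tx1\<bar> \<bar>m tx2\<bar> = m tx2" using True ab by auto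
    have X2: "(m tx2 - s0) * e \<le> I w2 (\<lambda>x. max (m x - s0) 0)"
    proof -
      have "(m tx2 - s0) * e \<le> (m tx2 - s0) * (c_f * (x2 - tx2))"
        unfolding e_def using s cf by (intro mult_left_mono) auto
      then show ?thesis using d(7) by (simp add: mult.assoc)
    qed
    have "k * m tx2 \<le> s0 + I w2 (\<lambda>x. max (m x - s0) 0) - I w2 (\<lambda>x. max (s0 - m x) 0) \<or>
          k * m tx2 \<le> - (s0 + I w1 (\<lambda>x. max (m x - s0) 0) - I w1 (\<lambda>x. max (s0 - m x) 0))"
      by (rule arith_core[OF CF e0 e1 kk _ s(2) d(3) d(4) X2]) (simp add: s0_def)
    then show ?thesis unfolding M using d(1,2) by simp
  next
    case False
    define s0 where "s0 = min (m tx2) 0"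
    have s: "m tx1 \<le> s0" "s0 \<le> m tx2" using False ab unfolding s0_def by auto
    note d = decomp[OF m K s]
    have M: "max \<bar>m tx1\<bar> \<bar>m tx2\<bar> = - m tx1" using False ab by auto
    have Y1: "(- m tx1 - - s0) * e \<le> I w1 (\<lambda>x. max (s0 - m x) 0)"
    proof -
      have "(s0 - m tx1) * e \<le> (s0 - m tx1) * (c_f * (tx1 - x1))"
        unfolding e_def using s cf by (intro mult_left_mono) auto
      then show ?thesis using d(8) by (simp add: mult.assoc)
    qed
    have "k * - m tx1 \<le> - s0 + I w1 (\<lambda>x. max (s0 - m x) 0) - I w1 (\<lambda>x. max (m x - s0) 0) \<or>
          k * - m tx1 \<le> - (- s0 + I w2 (\<lambda>x. max (s0 - m x) 0) - I w2 (\<lambda>x. max (m x - s0) 0))"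
      by (rule arith_core[OF CF e0 e1 kk _ _ d(4) d(3) Y1]) (use s in \<open>simp_all add: s0_def\<close>)
    then show ?thesis unfolding M using d(1,2) by auto
  qed
qed

end



context ivs
begin

lemma fjoint_swap[measurable]: "(\<lambda>(w,x). f x w) \<in> borel_measurable (lborel \<Otimes>\<^sub>M lborel)"
  using measurable_compose[OF measurable_pair_swap' fjoint]
  by (simp add: case_prod_beta' split_beta')

lemma L2_meas: "L2 h \<Longrightarrow> h \<in> borel_measurable lborel" unfolding L2_def by simp

lemma Top_meas:
  assumes h: "L2 h"
  shows "Top f h \<in> borel_measurable lborel"
proof -
  have [measurable]: "h \<in> borel_measurable lborel" using h by (rule L2_meas)
  have "(\<lambda>w. \<integral>x. indicator {0..1} x *\<^sub>R (h x * f x w) \<partial>lborel) \<in> borel_measurable lborel"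
    by measurable
  then show ?thesis unfolding Top_def[abs_def] set_lebesgue_integral_def .
qed

lemma T_bound:
  assumes sq: "set_integrable (lborel \<Otimes>\<^sub>M lborel) ({0..1} \<times> {0..1}) (\<lambda>(x,w). (f x w)\<^sup>2)"
    and h: "L2 h"
  shows "set_integrable lborel {0..1} (\<lambda>w. (Top f h w)\<^sup>2)"
    and "(LINT w:{0..1}|lborel. (Top f h w)\<^sup>2) \<le> (LINT x:{0..1}|lborel. (h x)\<^sup>2) *
           (LINT p:({0..1} \<times> {0..1})|(lborel \<Otimes>\<^sub>M lborel). (\<lambda>(x,w). (f x w)\<^sup>2) p)"
proof -
  have hm[measurable]: "h \<in> borel_measurable lborel" using h by (rule L2_meas)
  have h2: "set_integrable lborel {0..1} (\<lambda>x. (h x)\<^sup>2)" using h unfolding L2_def by simp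
  have Tm[measurable]: "Top f h \<in> borel_measurable lborel" using h by (rule Top_meas)
  define g where "g = (\<lambda>x w. indicator ({0..1} \<times> {0..1}) (x,w) * (f x w)\<^sup>2 :: real)"
  have geq: "(\<lambda>p. indicator ({0..1} \<times> {0..1}) p *\<^sub>R (\<lambda>(x,w). (f x w)\<^sup>2) p) = case_prod g"
    unfolding g_def by (auto simp: fun_eq_iff)
  have gi: "integrable (lborel \<Otimes>\<^sub>M lborel) (case_prod g)"
    using sq unfolding set_integrable_def geq .
  define KT where "KT = (LINT p:({0..1} \<times> {0..1})|(lborel \<Otimes>\<^sub>M lborel). (\<lambda>(x,w). (f x w)\<^sup>2) p)"
  have KTeq: "KT = integral\<^sup>L (lborel \<Otimes>\<^sub>M lborel) (case_prod g)"
    unfolding KT_def set_lebesgue_integral_def geq ..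
  define F2 where "F2 w = (\<integral>x. g x w \<partial>lborel)" for w
  have AEi: "AE w in lborel. integrable lborel (\<lambda>x. g x w)"
    by (rule lborel_pair.AE_integrable_snd[OF gi])
  have F2i: "integrable lborel F2" unfolding F2_def[abs_def] by (rule lborel_pair.integrable_snd[OF gi])
  have F2int: "(\<integral>w. F2 w \<partial>lborel) = KT"
    unfolding F2_def KTeq by (rule lborel_pair.integral_snd[OF gi])
  define Hx where "Hx = (LINT x:{0..1}|lborel. (h x)\<^sup>2)"
  have Hx0: "0 \<le> Hx" unfolding Hx_def by (rule sint_nonneg) simp
  have F20: "0 \<le> F2 w" for w unfolding F2_def g_def by (rule Bochner_Integration.integral_nonneg) (auto simp: indicator_def)
  have pw: "AE w in lborel. indicator {0..1} w * (Top f h w)\<^sup>2 \<le> Hx * F2 w"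
    using AEi
  proof eventually_elim
    fix w :: real assume iw: "integrable lborel (\<lambda>x. g x w)"
    show "indicator {0..1} w * (Top f h w)\<^sup>2 \<le> Hx * F2 w"
    proof (cases "w \<in> {0..1}")
      case False then show ?thesis using Hx0 F20 by simp
    next
      case True
      have ge: "(\<lambda>x. g x w) = (\<lambda>x. indicator {0..1} x *\<^sub>R (f x w)\<^sup>2)"
        using True unfolding g_def by (auto simp: fun_eq_iff indicator_def)
      have f2: "set_integrable lborel {0..1} (\<lambda>x. (f x w)\<^sup>2)"
        using iw unfolding set_integrable_def ge .
      have F2w: "F2 w = (LINT x:{0..1}|lborel. (f x w)\<^sup>2)"
        unfolding F2_def set_lebesgue_integral_def ge ..
      have "(Top f h w)\<^sup>2 \<le> Hx * F2 w"
        unfolding Top_def Hx_def F2w by (rule CS_set(2)[OF hm fmeas _ h2 f2]) simp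
      then show ?thesis using True by simp
    qed
  qed
  have ib: "integrable lborel (\<lambda>w. indicator {0..1} w * (Top f h w)\<^sup>2)"
  proof (rule Bochner_Integration.integrable_bound[OF integrable_mult_right[OF F2i, of Hx]])
    show "(\<lambda>w. indicator {0..1} w * (Top f h w)\<^sup>2) \<in> borel_measurable lborel" by measurable
    show "AE w in lborel. norm (indicator {0..1} w * (Top f h w)\<^sup>2) \<le> norm (Hx * F2 w)"
      using pw
    proof eventually_elim
      fix w assume "indicator {0..1} w * (Top f h w)\<^sup>2 \<le> Hx * F2 w"
      moreover have "0 \<le> indicator {0..1} w * (Top f h w)\<^sup>2" by simp
      moreover have "0 \<le> Hx * F2 w" using Hx0 F20 by simp
      ultimately show "norm (indicator {0..1} w * (Top f h w)\<^sup>2) \<le> norm (Hx * F2 w)" by simp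
    qed
  qed
  then show "set_integrable lborel {0..1} (\<lambda>w. (Top f h w)\<^sup>2)"
    unfolding set_integrable_def by simp
  have "(LINT w:{0..1}|lborel. (Top f h w)\<^sup>2) = (\<integral>w. indicator {0..1} w * (Top f h w)\<^sup>2 \<partial>lborel)"
    unfolding set_lebesgue_integral_def by simp
  also have "\<dots> \<le> (\<integral>w. Hx * F2 w \<partial>lborel)"
    by (rule integral_mono_AE[OF ib integrable_mult_right[OF F2i] pw])
  also have "\<dots> = Hx * KT" using F2int by simp
  finally show "(LINT w:{0..1}|lborel. (Top f h w)\<^sup>2) \<le> (LINT x:{0..1}|lborel. (h x)\<^sup>2) *
           (LINT p:({0..1} \<times> {0..1})|(lborel \<Otimes>\<^sub>M lborel). (\<lambda>(x,w). (f x w)\<^sup>2) p)"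
    unfolding Hx_def KT_def .
qed

lemma AE_f2:
  assumes sq: "set_integrable (lborel \<Otimes>\<^sub>M lborel) ({0..1} \<times> {0..1}) (\<lambda>(x,w). (f x w)\<^sup>2)"
  shows "AE w in lborel. w \<in> {0..1} \<longrightarrow> set_integrable lborel {0..1} (\<lambda>x. (f x w)\<^sup>2)"
proof -
  define g where "g = (\<lambda>x w. indicator ({0..1} \<times> {0..1}) (x,w) * (f x w)\<^sup>2 :: real)"
  have geq: "(\<lambda>p. indicator ({0..1} \<times> {0..1}) p *\<^sub>R (\<lambda>(x,w). (f x w)\<^sup>2) p) = case_prod g"
    unfolding g_def by (auto simp: fun_eq_iff)
  have gi: "integrable (lborel \<Otimes>\<^sub>M lborel) (case_prod g)"
    using sq unfolding set_integrable_def geq .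
  have AEi: "AE w in lborel. integrable lborel (\<lambda>x. g x w)"
    by (rule lborel_pair.AE_integrable_snd[OF gi])
  then show ?thesis
  proof eventually_elim
    fix w :: real assume iw: "integrable lborel (\<lambda>x. g x w)"
    show "w \<in> {0..1} \<longrightarrow> set_integrable lborel {0..1} (\<lambda>x. (f x w)\<^sup>2)"
    proof
      assume w: "w \<in> {0..1}"
      have ge: "(\<lambda>x. g x w) = (\<lambda>x. indicator {0..1} x *\<^sub>R (f x w)\<^sup>2)"
        using w unfolding g_def by (auto simp: fun_eq_iff indicator_def)
      show "set_integrable lborel {0..1} (\<lambda>x. (f x w)\<^sup>2)"
        using iw unfolding set_integrable_def ge .
    qed
  qed
qed

lemma Top_add_AE:
  assumes sq: "set_integrable (lborel \<Otimes>\<^sub>M lborel) ({0..1} \<times> {0..1}) (\<lambda>(x,w). (f x w)\<^sup>2)"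
    and a: "L2 a" and b: "L2 b"
  shows "AE w in lborel. w \<in> {0..1} \<longrightarrow> Top f (\<lambda>x. a x + b x) w = Top f a w + Top f b w"
  using AE_f2[OF sq]
proof eventually_elim
  fix w :: real assume H: "w \<in> {0..1} \<longrightarrow> set_integrable lborel {0..1} (\<lambda>x. (f x w)\<^sup>2)"
  show "w \<in> {0..1} \<longrightarrow> Top f (\<lambda>x. a x + b x) w = Top f a w + Top f b w"
  proof
    assume "w \<in> {0..1}"
    with H have f2: "set_integrable lborel {0..1} (\<lambda>x. (f x w)\<^sup>2)" by simp
    have ia: "set_integrable lborel {0..1} (\<lambda>x. a x * f x w)"
      by (rule CS_set(1)[OF L2_meas[OF a] fmeas _ _ f2]) (use a in \<open>auto simp: L2_def\<close>)
    have ib: "set_integrable lborel {0..1} (\<lambda>x. b x * f x w)"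
      by (rule CS_set(1)[OF L2_meas[OF b] fmeas _ _ f2]) (use b in \<open>auto simp: L2_def\<close>)
    show "Top f (\<lambda>x. a x + b x) w = Top f a w + Top f b w"
      unfolding Top_def using ia ib by (simp add: distrib_right)
  qed
qed

lemma L2_add: "L2 a \<Longrightarrow> L2 b \<Longrightarrow> L2 (\<lambda>x. a x + b x)"
proof -
  assume a: "L2 a" and b: "L2 b"
  have [measurable]: "a \<in> borel_measurable lborel" "b \<in> borel_measurable lborel" using a b by (auto simp: L2_def)
  have a2: "set_integrable lborel {0..1} (\<lambda>x. (a x)\<^sup>2)" and b2: "set_integrable lborel {0..1} (\<lambda>x. (b x)\<^sup>2)"
    using a b by (auto simp: L2_def)
  have ab: "set_integrable lborel {0..1} (\<lambda>x. a x * b x)" by (rule CS_set(1)[OF _ _ _ a2 b2]) auto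
  have "set_integrable lborel {0..1} (\<lambda>x. (a x)\<^sup>2 + 2 * (a x * b x) + (b x)\<^sup>2)"
    using a2 b2 ab by auto
  then have "set_integrable lborel {0..1} (\<lambda>x. (a x + b x)\<^sup>2)"
    by (simp add: power2_eq_square algebra_simps)
  then show ?thesis unfolding L2_def by simp
qed

lemma L2_uminus: "L2 a \<Longrightarrow> L2 (\<lambda>x. - a x)"
  unfolding L2_def by simp

lemma mink_T:
  assumes sq: "set_integrable (lborel \<Otimes>\<^sub>M lborel) ({0..1} \<times> {0..1}) (\<lambda>(x,w). (f x w)\<^sup>2)"
    and a: "L2 a" and b: "L2 b"
  shows "norm2 (Top f (\<lambda>x. a x + b x)) \<le> norm2 (Top f a) + norm2 (Top f b)"
proof -
  have [measurable]: "Top f a \<in> borel_measurable lborel" "Top f b \<in> borel_measurable lborel"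
    "Top f (\<lambda>x. a x + b x) \<in> borel_measurable lborel"
    using Top_meas a b L2_add[OF a b] by auto
  have "(LINT w:{0..1}|lborel. (Top f (\<lambda>x. a x + b x) w)\<^sup>2) = (LINT w:{0..1}|lborel. (Top f a w + Top f b w)\<^sup>2)"
    by (rule set_lebesgue_integral_cong_AE) (use Top_add_AE[OF sq a b] in auto)
  also have "sqrt \<dots> \<le> norm2 (Top f a) + norm2 (Top f b)"
    unfolding norm2_def by (rule mink_set) (use T_bound(1)[OF sq a] T_bound(1)[OF sq b] in auto)
  finally show ?thesis unfolding norm2_def .
qed

lemma normT:
  assumes sq: "set_integrable (lborel \<Otimes>\<^sub>M lborel) ({0..1} \<times> {0..1}) (\<lambda>(x,w). (f x w)\<^sup>2)"
    and h: "L2 h"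
  shows "norm2 (Top f h) \<le> sqrt (LINT p:({0..1} \<times> {0..1})|(lborel \<Otimes>\<^sub>M lborel). (\<lambda>(x,w). (f x w)\<^sup>2) p) * norm2 h"
  unfolding norm2_def real_sqrt_mult[symmetric] using T_bound(2)[OF sq h]
  by (simp add: mult.commute)

lemma opnorm_bound:
  assumes sq: "set_integrable (lborel \<Otimes>\<^sub>M lborel) ({0..1} \<times> {0..1}) (\<lambda>(x,w). (f x w)\<^sup>2)"
    and h: "L2 h"
  shows "norm2 (Top f h) \<le> opnorm f * norm2 h"
proof -
  define KT where "KT = (LINT p:({0..1} \<times> {0..1})|(lborel \<Otimes>\<^sub>M lborel). (\<lambda>(x,w). (f x w)\<^sup>2) p)"
  define S where "S = {norm2 (Top f h) | h. L2 h \<and> norm2 h = 1}"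
  have bdd: "bdd_above S"
  proof (rule bdd_aboveI)
    fix y assume "y \<in> S"
    then obtain h' where "y = norm2 (Top f h')" "L2 h'" "norm2 h' = 1" unfolding S_def by auto
    then show "y \<le> sqrt KT" using normT[OF sq, of h'] unfolding KT_def by simp
  qed
  have n0: "0 \<le> norm2 h" unfolding norm2_def by (simp add: sint_nonneg)
  have T0: "0 \<le> norm2 (Top f h)" unfolding norm2_def by (simp add: sint_nonneg)
  show ?thesis
  proof (cases "norm2 h = 0")
    case True
    then show ?thesis using normT[OF sq h] T0 by simp
  next
    case False
    define n where "n = norm2 h"
    have np: "n > 0" using False n0 unfolding n_def by simp
    define h' where "h' x = h x / n" for x
    have [measurable]: "h \<in> borel_measurable lborel" using h by (rule L2_meas)
    have h2: "set_integrable lborel {0..1} (\<lambda>x. (h x)\<^sup>2)" using h by (simp add: L2_def)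
    have L2h': "L2 h'"
    proof -
      have "set_integrable lborel {0..1} (\<lambda>x. (h x)\<^sup>2 / n\<^sup>2)" using h2 by (rule set_integrable_divide)
      then show ?thesis unfolding L2_def h'_def by (simp add: power_divide)
    qed
    have "(LINT x:{0..1}|lborel. (h x)\<^sup>2) = n\<^sup>2"
    proof -
      have "0 \<le> (LINT x:{0..1}|lborel. (h x)\<^sup>2)" by (rule sint_nonneg) simp
      then show ?thesis unfolding n_def norm2_def by simp
    qed
    then have nh': "norm2 h' = 1" unfolding norm2_def h'_def using np by (simp add: power_divide)
    have Th': "Top f h' w = Top f h w / n" for w
      unfolding Top_def h'_def by simp
    have "norm2 (Top f h') = norm2 (Top f h) / n"
      unfolding norm2_def Th' using np by (simp add: power_divide real_sqrt_divide)
    moreover have "norm2 (Top f h') \<in> S" unfolding S_def using L2h' nh' by auto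
    ultimately have "norm2 (Top f h) / n \<le> Sup S" using bdd by (metis cSup_upper)
    then have "norm2 (Top f h) \<le> Sup S * n" using np by (simp add: field_simps)
    then show ?thesis unfolding opnorm_def S_def[symmetric] n_def .
  qed
qed

end



lemma lowT:
  fixes T :: "real \<Rightarrow> real"
  assumes sT: "set_integrable lborel {0..1} (\<lambda>w. (T w)\<^sup>2)"
    and ab: "0 \<le> \<alpha>" "\<alpha> \<le> \<beta>" "\<beta> \<le> 1"
    and c: "\<And>w. w \<in> {\<alpha><..<\<beta>} \<Longrightarrow> c \<le> (T w)\<^sup>2"
  shows "c * (\<beta> - \<alpha>) \<le> (LINT w:{0..1}|lborel. (T w)\<^sup>2)"
proof -
  have sub: "{\<alpha><..<\<beta>} \<subseteq> {0..1}" using ab by auto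
  have e: "(\<lambda>x. indicator {0..1} x *\<^sub>R indicator {\<alpha><..<\<beta>} x) = (indicator {\<alpha><..<\<beta>} :: real \<Rightarrow> real)"
    using sub by (auto simp: indicator_def fun_eq_iff)
  have ii: "set_integrable lborel {0..1} (\<lambda>x. indicator {\<alpha><..<\<beta>} x :: real)"
    unfolding set_integrable_def e using ab by (intro integrable_real_indicator) auto
  have i1: "(LINT x:{0..1}|lborel. indicator {\<alpha><..<\<beta>} x) = (\<integral>x. indicator {\<alpha><..<\<beta>} x \<partial>lborel :: real)"
    unfolding set_lebesgue_integral_def using e by simp
  have i2: "(\<integral>x. indicator {\<alpha><..<\<beta>} x \<partial>lborel :: real) = \<beta> - \<alpha>" using ab by simp
  have "(LINT w:{0..1}|lborel. c * indicator {\<alpha><..<\<beta>} w) \<le> (LINT w:{0..1}|lborel. (T w)\<^sup>2)"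
  proof (rule set_integral_mono)
    show "set_integrable lborel {0..1} (\<lambda>w. c * indicator {\<alpha><..<\<beta>} w)"
      using ii by (intro set_integrable_mult_right)
    show "set_integrable lborel {0..1} (\<lambda>w. (T w)\<^sup>2)" by (rule sT)
    fix w :: real assume "w \<in> {0..1}"
    show "c * indicator {\<alpha><..<\<beta>} w \<le> (T w)\<^sup>2"
      using c[of w] by (cases "w \<in> {\<alpha><..<\<beta>}") auto
  qed
  then show ?thesis using i1 i2 by simp
qed

context ivs
begin

lemma main_mono:
  assumes sq: "set_integrable (lborel \<Otimes>\<^sub>M lborel) ({0..1} \<times> {0..1}) (\<lambda>(x,w). (f x w)\<^sup>2)"
    and u: "L2 u" and m: "mono_on {0..1} m" and ae: "AE x in lborel. x \<in> {0..1} \<longrightarrow> u x = m x"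
  shows "norm2t tx1 tx2 u \<le> (sqrt (tx2 - tx1) / min (tx1 - x1) (x2 - tx2))
           / (min (1 - w2) w1 * min (C_F - 1) 2 * c_W * c_f / 4) * norm2 (Top f u)"
proof -
  define cl where "cl x = max 0 (min 1 x)" for x :: real
  have cl01: "cl x \<in> {0..1}" for x unfolding cl_def by auto
  have clid: "x \<in> {0..1} \<Longrightarrow> cl x = x" for x unfolding cl_def by auto
  have clmono: "x \<le> y \<Longrightarrow> cl x \<le> cl y" for x y unfolding cl_def by auto
  define mm where "mm x = m (cl x)" for x
  have mmono: "mono mm"
    by (rule monoI) (unfold mm_def, rule mono_onD[OF m cl01 cl01 clmono])
  define K where "K = \<bar>m 0\<bar> + \<bar>m 1\<bar>"
  have K: "\<bar>mm x\<bar> \<le> K" for x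
  proof -
    have "m 0 \<le> mm x" unfolding mm_def by (rule mono_onD[OF m]) (use cl01[of x] in auto)
    moreover have "mm x \<le> m 1" unfolding mm_def by (rule mono_onD[OF m]) (use cl01[of x] in auto)
    ultimately show ?thesis unfolding K_def by linarith
  qed
  have mmeq: "x \<in> {0..1} \<Longrightarrow> mm x = m x" for x unfolding mm_def using clid by simp
  have mmm[measurable]: "mm \<in> borel_measurable lborel" by (rule mono_meas[OF mmono])
  have um[measurable]: "u \<in> borel_measurable lborel" using u by (rule L2_meas)
  have ae': "AE x in lborel. x \<in> {0..1} \<longrightarrow> u x = mm x" using ae by eventually_elim (simp add: mmeq)
  have Teq: "Top f u w = Top f mm w" for w
    unfolding Top_def by (rule set_lebesgue_integral_cong_AE) (use ae' in auto)
  have L2mm: "L2 mm"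
  proof -
    have "set_integrable lborel {0..1} (\<lambda>x. (u x)\<^sup>2)" using u by (simp add: L2_def)
    moreover have "set_integrable lborel {0..1} (\<lambda>x. (u x)\<^sup>2) = set_integrable lborel {0..1} (\<lambda>x. (mm x)\<^sup>2)"
      by (rule set_integrable_cong_AE) (use ae' in auto)
    ultimately show ?thesis unfolding L2_def by simp
  qed
  have TI: "Top f mm w = I w mm * fW f w" if w: "w \<in> {0..1}" for w
  proof -
    have "I w mm = Top f mm w / fW f w"
      unfolding I_def Top_def pd_def by (simp only: times_divide_eq_right set_integral_divide_zero)
    then show ?thesis using fWpos[OF w] by simp
  qed
  define M where "M = max \<bar>mm tx1\<bar> \<bar>mm tx2\<bar>"
  have M0: "0 \<le> M" unfolding M_def by simp
  have nt_eq: "norm2t tx1 tx2 u = norm2t tx1 tx2 mm"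
  proof -
    have "(LINT x:{tx1..tx2}|lborel. (u x)\<^sup>2) = (LINT x:{tx1..tx2}|lborel. (mm x)\<^sup>2)"
      by (rule set_lebesgue_integral_cong_AE) (use ae' pts in auto)
    then show ?thesis unfolding norm2t_def by simp
  qed
  have nt: "norm2t tx1 tx2 mm \<le> sqrt (tx2 - tx1) * M"
  proof -
    have "(LINT x:{tx1..tx2}|lborel. (mm x)\<^sup>2) \<le> (LINT x:{tx1..tx2}|lborel. M\<^sup>2)"
      unfolding set_lebesgue_integral_def
    proof (rule integral_mono')
      show "integrable lborel (\<lambda>x. indicator {tx1..tx2} x *\<^sub>R M\<^sup>2)"
        using integrable_real_indicator[of "{tx1..tx2}" lborel] pts by (auto simp: emeasure_lborel_Icc_eq)
      fix x :: real
      show "0 \<le> indicator {tx1..tx2} x *\<^sub>R M\<^sup>2" by simp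
      show "indicator {tx1..tx2} x *\<^sub>R (mm x)\<^sup>2 \<le> indicator {tx1..tx2} x *\<^sub>R M\<^sup>2"
      proof (cases "x \<in> {tx1..tx2}")
        case True
        then have "mm tx1 \<le> mm x" "mm x \<le> mm tx2" by (auto intro: monoD[OF mmono])
        then have "\<bar>mm x\<bar> \<le> M" unfolding M_def by linarith
        then have "\<bar>mm x\<bar>\<^sup>2 \<le> M\<^sup>2" by (rule power_mono) simp
        then have "(mm x)\<^sup>2 \<le> M\<^sup>2" by simp
        then show ?thesis using True by simp
      qed simp
    qed
    also have "\<dots> = M\<^sup>2 * (tx2 - tx1)"
      using set_integral_const[of "{tx1..tx2}" lborel "M\<^sup>2"] pts by (simp add: emeasure_lborel_Icc_eq)
    finally have "sqrt (LINT x:{tx1..tx2}|lborel. (mm x)\<^sup>2) \<le> sqrt (M\<^sup>2 * (tx2 - tx1))"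
      by (rule real_sqrt_le_mono)
    also have "\<dots> = sqrt (tx2 - tx1) * M" using M0 by (simp add: real_sqrt_mult)
    finally show ?thesis unfolding norm2t_def .
  qed
  define \<delta> where "\<delta> = min (tx1 - x1) (x2 - tx2)"
  define k where "k = min (C_F - 1) 2 * (c_f * \<delta>) / 4"
  define \<mu> where "\<mu> = min (1 - w2) w1"
  have \<delta>0: "0 < \<delta>" unfolding \<delta>_def using pts by simp
  have \<mu>0: "0 < \<mu>" and \<mu>1: "\<mu> \<le> 1" unfolding \<mu>_def using wpts by auto
  have k0: "0 \<le> k" unfolding k_def using CF cf \<delta>0 by simp
  have kM0: "0 \<le> k * M * c_W" using k0 M0 cW by simp
  have kM: "0 \<le> k * M" using k0 M0 by simp
  note cr = core[OF mmono K, folded \<delta>_def, folded k_def M_def]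
  define T where "T = Top f mm"
  have sT: "set_integrable lborel {0..1} (\<lambda>w. (T w)\<^sup>2)" unfolding T_def by (rule T_bound(1)[OF sq L2mm])
  have low: "(k * M * c_W)\<^sup>2 * \<mu> \<le> (LINT w:{0..1}|lborel. (T w)\<^sup>2)"
    using cr
  proof
    assume A: "k * M \<le> I w2 mm"
    have "(k * M * c_W)\<^sup>2 * (1 - w2) \<le> (LINT w:{0..1}|lborel. (T w)\<^sup>2)"
    proof (rule lowT[OF sT])
      fix w assume w: "w \<in> {w2<..<1}"
      then have w01: "w \<in> {0..1}" using wpts by auto
      have "I w2 mm \<le> I w mm" by (rule dom_w[OF mmono K]) (use w wpts in auto)
      then have "k * M \<le> I w mm" using A by simp
      moreover have "c_W \<le> fW f w" using A2iii[OF w01] by simp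
      ultimately have "k * M * c_W \<le> I w mm * fW f w"
        using kM cW by (intro mult_mono) auto
      then have "k * M * c_W \<le> T w" unfolding T_def using TI[OF w01] by simp
      then show "(k * M * c_W)\<^sup>2 \<le> (T w)\<^sup>2" using kM0 by (intro power_mono) auto
    qed (use wpts in auto)
    moreover have "(k * M * c_W)\<^sup>2 * \<mu> \<le> (k * M * c_W)\<^sup>2 * (1 - w2)"
      unfolding \<mu>_def by (intro mult_left_mono) auto
    ultimately show ?thesis by linarith
  next
    assume B: "k * M \<le> - I w1 mm"
    have "(k * M * c_W)\<^sup>2 * (w1 - 0) \<le> (LINT w:{0..1}|lborel. (T w)\<^sup>2)"
    proof (rule lowT[OF sT])
      fix w assume w: "w \<in> {0<..<w1}"
      then have w01: "w \<in> {0..1}" using wpts by auto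
      have "I w mm \<le> I w1 mm" by (rule dom_w[OF mmono K]) (use w wpts in auto)
      then have "k * M \<le> - I w mm" using B by simp
      moreover have "c_W \<le> fW f w" using A2iii[OF w01] by simp
      ultimately have "k * M * c_W \<le> (- I w mm) * fW f w"
        using kM cW by (intro mult_mono) auto
      then have "k * M * c_W \<le> - T w" unfolding T_def using TI[OF w01] by simp
      then have "(k * M * c_W)\<^sup>2 \<le> (- T w)\<^sup>2" using kM0 by (intro power_mono) auto
      then show "(k * M * c_W)\<^sup>2 \<le> (T w)\<^sup>2" by simp
    qed (use wpts in auto)
    moreover have "(k * M * c_W)\<^sup>2 * \<mu> \<le> (k * M * c_W)\<^sup>2 * (w1 - 0)"
      unfolding \<mu>_def by (intro mult_left_mono) auto
    ultimately show ?thesis by linarith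
  qed
  have N: "k * M * c_W * \<mu> \<le> norm2 (Top f u)"
  proof -
    have "sqrt ((k * M * c_W)\<^sup>2 * \<mu>) \<le> norm2 (Top f u)"
      unfolding norm2_def Teq[abs_def] T_def[symmetric] using low by (rule real_sqrt_le_mono)
    moreover have "sqrt ((k * M * c_W)\<^sup>2 * \<mu>) = k * M * c_W * sqrt \<mu>"
      using kM0 by (simp add: real_sqrt_mult)
    moreover have "\<mu> \<le> sqrt \<mu>"
    proof -
      have "\<mu> = sqrt \<mu> * sqrt \<mu>" using \<mu>0 by simp
      also have "\<dots> \<le> sqrt \<mu> * 1" using \<mu>1 \<mu>0 by (intro mult_left_mono) auto
      finally show ?thesis by simp
    qed
    then have "k * M * c_W * \<mu> \<le> k * M * c_W * sqrt \<mu>" using kM0 by (intro mult_left_mono) auto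
    ultimately show ?thesis by linarith
  qed
  define cp where "cp = \<mu> * min (C_F - 1) 2 * c_W * c_f / 4"
  have cp0: "0 < cp" unfolding cp_def using \<mu>0 CF cW cf by simp
  have kcp: "k * M * c_W * \<mu> = cp * \<delta> * M" unfolding k_def cp_def by (simp add: field_simps)
  define A where "A = sqrt (tx2 - tx1)"
  have A0: "0 \<le> A" unfolding A_def using pts by simp
  have "norm2t tx1 tx2 u \<le> A * M" using nt nt_eq unfolding A_def by simp
  also have "A * M = (A / \<delta>) / cp * (cp * \<delta> * M)" using cp0 \<delta>0 by (simp add: field_simps)
  also have "\<dots> \<le> (A / \<delta>) / cp * norm2 (Top f u)"
    using N kcp A0 \<delta>0 cp0 by (intro mult_left_mono) auto
  finally show ?thesis unfolding A_def \<delta>_def cp_def \<mu>_def .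
qed

end



theorem theorem4:
  fixes f :: "real \<Rightarrow> real \<Rightarrow> real"
    and x1 tx1 tx2 x2 w1 w2 C_F C_T c_f c_W C_W :: real
    and g' g'' :: "real \<Rightarrow> real"
  assumes pts: "0 \<le> x1" "x1 < tx1" "tx1 < tx2" "tx2 < x2" "x2 \<le> 1"
      and wpts: "0 < w1" "w1 < w2" "w2 < 1"
      and dens: "joint_density f"
      and A1a: "\<And>x w' w''. x \<in> {0<..<1} \<Longrightarrow> w' \<in> {0<..<1} \<Longrightarrow> w'' \<in> {0<..<1} \<Longrightarrow>
                 w' \<le> w'' \<Longrightarrow> FXgW f x w' \<ge> FXgW f x w''"
      and CF: "C_F > 1"
      and A1b1: "\<And>x. x \<in> {0<..<x2} \<Longrightarrow> FXgW f x w1 \<ge> C_F * FXgW f x w2"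
      and A1b2: "\<And>x. x \<in> {x1<..<1} \<Longrightarrow> C_F * (1 - FXgW f x w1) \<le> 1 - FXgW f x w2"
      and A2i: "set_integrable (lborel \<Otimes>\<^sub>M lborel) ({0..1} \<times> {0..1}) (\<lambda>(x,w). (f x w)\<^sup>2)"
               "(LINT p:({0..1} \<times> {0..1})|(lborel \<Otimes>\<^sub>M lborel). (\<lambda>(x,w). (f x w)\<^sup>2) p) \<le> C_T"
      and A2ii: "c_f > 0" "\<And>x w. x \<in> {x1..x2} \<Longrightarrow> w \<in> {w1, w2} \<Longrightarrow> fXgW f x w \<ge> c_f"
      and A2iii: "0 < c_W" "c_W \<le> C_W" "\<And>w. w \<in> {0..1} \<Longrightarrow> c_W \<le> fW f w \<and> fW f w \<le> C_W"
      and g: "L2 g'" "L2 g''"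
      and hex: "\<exists>h. L2 h \<and> inM (\<lambda>x. g' x - g'' x + h x) \<and>
                 norm2t tx1 tx2 h
                 + (sqrt (tx2 - tx1) / min (tx1 - x1) (x2 - tx2))
                   / (min (1 - w2) w1 * min (C_F - 1) 2 * c_W * c_f / 4)
                   * opnorm f * norm2 h
                 < norm2t tx1 tx2 (\<lambda>x. g' x - g'' x)"
  shows "norm2 (Top f (\<lambda>x. g' x - g'' x)) > 0"
proof -
  interpret ivs f x1 tx1 tx2 x2 w1 w2 C_F c_f c_W C_W
    by (unfold_locales) (use pts wpts dens A1a CF A1b1 A1b2 A2ii A2iii in auto)
  note sq = A2i(1)
  obtain h where hL2: "L2 h" and hM: "inM (\<lambda>x. g' x - g'' x + h x)"
    and ineq: "norm2t tx1 tx2 h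
                 + (sqrt (tx2 - tx1) / min (tx1 - x1) (x2 - tx2))
                   / (min (1 - w2) w1 * min (C_F - 1) 2 * c_W * c_f / 4)
                   * opnorm f * norm2 h
                 < norm2t tx1 tx2 (\<lambda>x. g' x - g'' x)"
    using hex by blast
  define Cb where "Cb = (sqrt (tx2 - tx1) / min (tx1 - x1) (x2 - tx2))
                   / (min (1 - w2) w1 * min (C_F - 1) 2 * c_W * c_f / 4)"
  have Cb0: "0 \<le> Cb"
  proof -
    have d1: "0 < min (tx1 - x1) (x2 - tx2)" using pts by simp
    have "0 < min (1 - w2) w1" using wpts by simp
    moreover have "0 < min (C_F - 1) 2" using CF by simp
    ultimately have d2: "0 < min (1 - w2) w1 * min (C_F - 1) 2 * c_W * c_f / 4"
      using cf cW by simp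
    have "0 \<le> sqrt (tx2 - tx1)" using pts by simp
    then show ?thesis unfolding Cb_def using d1 d2 by simp
  qed
  define D where "D = (\<lambda>x. g' x - g'' x)"
  define u where "u = (\<lambda>x. D x + h x)"
  have LD: "L2 D"
  proof -
    have "L2 (\<lambda>x. g' x + - g'' x)" by (rule L2_add[OF g(1) L2_uminus[OF g(2)]])
    then show ?thesis unfolding D_def by simp
  qed
  have uM: "inM u" using hM unfolding u_def D_def by simp
  then have Lu: "L2 u" unfolding inM_def by simp
  obtain m where mm: "mono_on {0..1} m \<or> antimono_on {0..1} m"
    and ae: "AE x in lborel. x \<in> {0..1} \<longrightarrow> u x = m x"
    using uM unfolding inM_def by blast
  have main: "norm2t tx1 tx2 u \<le> Cb * norm2 (Top f u)"
    using mm
  proof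
    assume "mono_on {0..1} m"
    then show ?thesis unfolding Cb_def by (rule main_mono[OF sq Lu _ ae])
  next
    assume am: "antimono_on {0..1} m"
    have m': "mono_on {0..1} (\<lambda>x. - m x)" using am by (auto simp: monotone_on_def)
    have ae': "AE x in lborel. x \<in> {0..1} \<longrightarrow> - u x = - m x" using ae by eventually_elim simp
    have "norm2t tx1 tx2 (\<lambda>x. - u x) \<le> Cb * norm2 (Top f (\<lambda>x. - u x))"
      unfolding Cb_def by (rule main_mono[OF sq L2_uminus[OF Lu] m' ae'])
    moreover have "norm2t tx1 tx2 (\<lambda>x. - u x) = norm2t tx1 tx2 u" unfolding norm2t_def by simp
    moreover have "Top f (\<lambda>x. - u x) = (\<lambda>w. - Top f u w)"
      unfolding Top_def set_lebesgue_integral_def by (simp add: fun_eq_iff)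
    moreover have "norm2 (\<lambda>w. - Top f u w) = norm2 (Top f u)" unfolding norm2_def by simp
    ultimately show ?thesis by simp
  qed
  have um[measurable]: "u \<in> borel_measurable lborel" using Lu by (rule L2_meas)
  have hm[measurable]: "h \<in> borel_measurable lborel" using hL2 by (rule L2_meas)
  have tsub: "{tx1..tx2} \<subseteq> {0..1}" using pts by auto
  have u2: "set_integrable lborel {tx1..tx2} (\<lambda>x. (u x)\<^sup>2)"
    using Lu tsub unfolding L2_def by (auto intro: set_integrable_subset)
  have h2: "set_integrable lborel {tx1..tx2} (\<lambda>x. (- h x)\<^sup>2)"
    using hL2 tsub unfolding L2_def by (auto intro: set_integrable_subset)
  have tri: "norm2t tx1 tx2 D \<le> norm2t tx1 tx2 u + norm2t tx1 tx2 h"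
  proof -
    have mk: "sqrt (LINT x:{tx1..tx2}|lborel. (u x + - h x)\<^sup>2)
          \<le> sqrt (LINT x:{tx1..tx2}|lborel. (u x)\<^sup>2) + sqrt (LINT x:{tx1..tx2}|lborel. (- h x)\<^sup>2)"
      by (rule mink_set[OF um _ _ u2 h2]) auto
    have e: "(\<lambda>x. (u x + - h x)\<^sup>2) = (\<lambda>x. (D x)\<^sup>2)" unfolding u_def by (simp add: fun_eq_iff)
    have e2: "(\<lambda>x. (- h x)\<^sup>2) = (\<lambda>x. (h x)\<^sup>2)" by simp
    from mk show ?thesis unfolding norm2t_def e e2 .
  qed
  have triT: "norm2 (Top f u) \<le> norm2 (Top f D) + norm2 (Top f h)"
    unfolding u_def by (rule mink_T[OF sq LD hL2])
  have opb: "norm2 (Top f h) \<le> opnorm f * norm2 h" by (rule opnorm_bound[OF sq hL2])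
  show ?thesis
  proof (rule ccontr)
    assume "\<not> ?thesis"
    then have z: "norm2 (Top f D) \<le> 0" unfolding D_def by simp
    have "norm2t tx1 tx2 D \<le> norm2t tx1 tx2 h + Cb * norm2 (Top f u)" using tri main by linarith
    also have "Cb * norm2 (Top f u) \<le> Cb * (opnorm f * norm2 h)"
      using triT z opb Cb0 by (intro mult_left_mono) auto
    finally have "norm2t tx1 tx2 D \<le> norm2t tx1 tx2 h + Cb * opnorm f * norm2 h" by (simp add: mult.assoc)
    then show False using ineq unfolding Cb_def D_def by simp
  qed
qed



end
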